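(* Let $\alpha\in(0,1]$ and let $b_2$ be a positive integer with $b_2<m^*$. Let $b_1'=\lceil\alpha n^*\rceil$ and $\epsilon=b_1'b_2\bigl(\frac{1}{\max\{b_1',m^*\}}-\frac{1}{n^*}\bigr)$. Then for every minimum set cover $S^{\min}$ and every maximum set packing $T^{\max}$, the pair $\bigl(b_1',(\sigma^1(S^{\min},b_1'),\sigma^2(T^{\max},b_2))\bigr)$ is a feasible solution of $(\mathcal P_\epsilon)$, and the optimal values of both $(\mathcal P)$ and $(\mathcal P_\epsilon)$ lie in the interval $[\lceil\alpha m^*\rceil,\lceil\alpha n^*\rceil]$; in particular the optimality gap of $b_1'$ is at most $\lceil\alpha n^*\rceil-\lceil\alpha m^*\rceil$.
   Context: Detection model: finite nonempty sets $\mathcal V$, $\mathcal E$, monitoring sets $\mathcal C_i\subseteq\mathcal E$ ($i\in\mathcal V$) with every $e\in\mathcal E$ in some $\mathcal C_i$; $\mathcal C_S=\bigcup_{i\in S}\mathcal C_i$; $F(S,T)=|\mathcal C_S\cap T|$. Set cover: $S\subseteq\mathcal V$ with $\mathcal C_S=\mathcal E$; $n^*$ = minimum size of a set cover (a minimum set cover has size $n^*$). Set packing: $T\subseteq\mathcal E$ with $|\mathcal C_i\cap T|\le1$ for all $i$; $m^*$ = maximum size (a maximum set packing has size $m^*$). Game $\Gamma(b_1,b_2)$ (positive integers $b_1,b_2$): $\mathcal A_1=\{S\subseteq\mathcal V:|S|\le b_1\}$, $\mathcal A_2=\{T\subseteq\mathcal E:|T|\le b_2\}$; mixed strategies $\sigma^1\in\Delta(\mathcal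 A_1)$, $\sigma^2\in\Delta(\mathcal A_2)$ (independent); payoffs $U_1=\mathbb E[F(S,T)]$, $U_2=\mathbb E[|T|]-\mathbb E[F(S,T)]$. $\Sigma(b_1,b_2)$ is the set of Nash equilibria; $\Sigma_\epsilon(b_1,b_2)$ the set of $\epsilon$-Nash equilibria (profiles where no player can gain more than $\epsilon$ by a unilateral deviation). Expected detection rate $r(\sigma)=\mathbb E[F(S,T)/|T|]$ for profiles whose attack strategy is supported on nonempty sets. Problem $(\mathcal P)$: minimize $b_1$ over positive integers $b_1$ and profiles $\sigma^\dagger$ subject to $r(\sigma^* )\ge\alpha$ for all $\sigma^*\in\Sigma(b_1,b_2)$ and $\sigma^\dagger\in\Sigma(b_1,b_2)$. Problem $(\mathcal P_\epsilon)$: the same, with the constraint $\sigma^\dagger\in\Sigma(b_1,b_2)$ replaced by $\sigma^\dagger\in\Sigma_\epsilon(b_1,b_2)$. Cyclic strategies: for $S=\{i_1,\dots,i_n\}$ with $n\ge b_1$, $S^k=\{i_k,\dots,i_{k+b_1-1}\}$ (indices cyclic mod $n$), $k=1,\dots,n$, and $\sigma^1(S,b_1)$ puts probability $1/n$ on each $S^k$; for $T=\{e_1,\dots,e_m\}$ with $m\ge b_2$, $T^l=\{e_l,\dots,e_{l+b_2-1}\}$ cyclically and $\sigma^2(T,b_2)$ puts probability $1/m$ on each $T^l$. *)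

theory Defs
  imports "HOL-Probability.Probability"
begin

definition cover_set :: "('v \<Rightarrow> 'e set) \<Rightarrow> 'v set \<Rightarrow> 'e set" where
  "cover_set C S = (\<Union>i\<in>S. C i)"

definition Fdet :: "('v \<Rightarrow> 'e set) \<Rightarrow> 'v set \<Rightarrow> 'e set \<Rightarrow> nat" where
  "Fdet C S T = card (cover_set C S \<inter> T)"

definition is_set_cover :: "'v set \<Rightarrow> 'e set \<Rightarrow> ('v \<Rightarrow> 'e set) \<Rightarrow> 'v set \<Rightarrow> bool" where
  "is_set_cover V E C S \<longleftrightarrow> S \<subseteq> V \<and> cover_set C S = E"

definition nstar :: "'v set \<Rightarrow> 'e set \<Rightarrow> ('v \<Rightarrow> 'e set) \<Rightarrow> nat" where
  "nstar V E C = (LEAST n. \<exists>S. is_set_cover V E C S \<and> card S = n)"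

definition is_min_set_cover :: "'v set \<Rightarrow> 'e set \<Rightarrow> ('v \<Rightarrow> 'e set) \<Rightarrow> 'v set \<Rightarrow> bool" where
  "is_min_set_cover V E C S \<longleftrightarrow> is_set_cover V E C S \<and> card S = nstar V E C"

definition is_set_packing :: "'v set \<Rightarrow> 'e set \<Rightarrow> ('v \<Rightarrow> 'e set) \<Rightarrow> 'e set \<Rightarrow> bool" where
  "is_set_packing V E C T \<longleftrightarrow> T \<subseteq> E \<and> (\<forall>i\<in>V. card (C i \<inter> T) \<le> 1)"

definition mstar :: "'v set \<Rightarrow> 'e set \<Rightarrow> ('v \<Rightarrow> 'e set) \<Rightarrow> nat" where
  "mstar V E C = Max {card T | T. is_set_packing V E C T}"

definition is_max_set_packing :: "'v set \<Rightarrow> 'e set \<Rightarrow> ('v \<Rightarrow> 'e set) \<Rightarrow> 'e set \<Rightarrow> bool" where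
  "is_max_set_packing V E C T \<longleftrightarrow> is_set_packing V E C T \<and> card T = mstar V E C"

definition A1 :: "'v set \<Rightarrow> nat \<Rightarrow> 'v set set" where
  "A1 V b1 = {S. S \<subseteq> V \<and> card S \<le> b1}"

definition A2 :: "'e set \<Rightarrow> nat \<Rightarrow> 'e set set" where
  "A2 E b2 = {T. T \<subseteq> E \<and> card T \<le> b2}"

definition U1 :: "('v \<Rightarrow> 'e set) \<Rightarrow> 'v set pmf \<Rightarrow> 'e set pmf \<Rightarrow> real" where
  "U1 C s1 s2 = measure_pmf.expectation (pair_pmf s1 s2) (\<lambda>(S, T). real (Fdet C S T))"

definition U2 :: "('v \<Rightarrow> 'e set) \<Rightarrow> 'v set pmf \<Rightarrow> 'e set pmf \<Rightarrow> real" where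
  "U2 C s1 s2 = measure_pmf.expectation (pair_pmf s1 s2) (\<lambda>(S, T). real (card T))
                 - U1 C s1 s2"

definition valid_profile :: "'v set \<Rightarrow> 'e set \<Rightarrow> nat \<Rightarrow> nat \<Rightarrow> 'v set pmf \<times> 'e set pmf \<Rightarrow> bool" where
  "valid_profile V E b1 b2 \<sigma> \<longleftrightarrow> set_pmf (fst \<sigma>) \<subseteq> A1 V b1 \<and> set_pmf (snd \<sigma>) \<subseteq> A2 E b2"

definition eps_nash :: "'v set \<Rightarrow> 'e set \<Rightarrow> ('v \<Rightarrow> 'e set) \<Rightarrow> nat \<Rightarrow> nat \<Rightarrow> real
    \<Rightarrow> 'v set pmf \<times> 'e set pmf \<Rightarrow> bool" where
  "eps_nash V E C b1 b2 \<epsilon> \<sigma> \<longleftrightarrow> valid_profile V E b1 b2 \<sigma> \<and>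
     (\<forall>\<tau>1. set_pmf \<tau>1 \<subseteq> A1 V b1 \<longrightarrow> U1 C \<tau>1 (snd \<sigma>) \<le> U1 C (fst \<sigma>) (snd \<sigma>) + \<epsilon>) \<and>
     (\<forall>\<tau>2. set_pmf \<tau>2 \<subseteq> A2 E b2 \<longrightarrow> U2 C (fst \<sigma>) \<tau>2 \<le> U2 C (fst \<sigma>) (snd \<sigma>) + \<epsilon>)"

definition nash :: "'v set \<Rightarrow> 'e set \<Rightarrow> ('v \<Rightarrow> 'e set) \<Rightarrow> nat \<Rightarrow> nat
    \<Rightarrow> 'v set pmf \<times> 'e set pmf \<Rightarrow> bool" where
  "nash V E C b1 b2 \<sigma> \<longleftrightarrow> eps_nash V E C b1 b2 0 \<sigma>"

text \<open>Expected detection rate (meaningful when the attack is supported on nonempty sets).\<close>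
definition det_rate :: "('v \<Rightarrow> 'e set) \<Rightarrow> 'v set pmf \<times> 'e set pmf \<Rightarrow> real" where
  "det_rate C \<sigma> = measure_pmf.expectation (pair_pmf (fst \<sigma>) (snd \<sigma>))
                    (\<lambda>(S, T). real (Fdet C S T) / real (card T))"

definition rate_ok :: "'v set \<Rightarrow> 'e set \<Rightarrow> ('v \<Rightarrow> 'e set) \<Rightarrow> real \<Rightarrow> nat \<Rightarrow> nat \<Rightarrow> bool" where
  "rate_ok V E C \<alpha> b1 b2 \<longleftrightarrow>
     (\<forall>\<sigma>. nash V E C b1 b2 \<sigma> \<and> {} \<notin> set_pmf (snd \<sigma>) \<longrightarrow> det_rate C \<sigma> \<ge> \<alpha>)"

definition feasible_P :: "'v set \<Rightarrow> 'e set \<Rightarrow> ('v \<Rightarrow> 'e set) \<Rightarrow> real \<Rightarrow> nat \<Rightarrow> nat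
    \<Rightarrow> 'v set pmf \<times> 'e set pmf \<Rightarrow> bool" where
  "feasible_P V E C \<alpha> b2 b1 \<sigma> \<longleftrightarrow> 0 < b1 \<and> rate_ok V E C \<alpha> b1 b2 \<and> nash V E C b1 b2 \<sigma>"

definition feasible_Peps :: "'v set \<Rightarrow> 'e set \<Rightarrow> ('v \<Rightarrow> 'e set) \<Rightarrow> real \<Rightarrow> nat \<Rightarrow> real \<Rightarrow> nat
    \<Rightarrow> 'v set pmf \<times> 'e set pmf \<Rightarrow> bool" where
  "feasible_Peps V E C \<alpha> b2 \<epsilon> b1 \<sigma> \<longleftrightarrow> 0 < b1 \<and> rate_ok V E C \<alpha> b1 b2 \<and> eps_nash V E C b1 b2 \<epsilon> \<sigma>"

definition opt_P :: "'v set \<Rightarrow> 'e set \<Rightarrow> ('v \<Rightarrow> 'e set) \<Rightarrow> real \<Rightarrow> nat \<Rightarrow> nat" where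
  "opt_P V E C \<alpha> b2 = (LEAST b1. \<exists>\<sigma>. feasible_P V E C \<alpha> b2 b1 \<sigma>)"

definition opt_Peps :: "'v set \<Rightarrow> 'e set \<Rightarrow> ('v \<Rightarrow> 'e set) \<Rightarrow> real \<Rightarrow> nat \<Rightarrow> real \<Rightarrow> nat" where
  "opt_Peps V E C \<alpha> b2 \<epsilon> = (LEAST b1. \<exists>\<sigma>. feasible_Peps V E C \<alpha> b2 \<epsilon> b1 \<sigma>)"

definition cyc_window :: "'a list \<Rightarrow> nat \<Rightarrow> nat \<Rightarrow> 'a set" where
  "cyc_window xs b k = {xs ! ((k + j) mod length xs) | j. j < b}"

definition cyc_strategy :: "'a list \<Rightarrow> nat \<Rightarrow> 'a set pmf" where
  "cyc_strategy xs b = map_pmf (cyc_window xs b) (pmf_of_set {..<length xs})"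

end

theory Submission
  imports Defs
begin

definition dsx :: "'a set \<Rightarrow> ('a \<Rightarrow> real) set" where
  "dsx X = {x \<in> PiE X (\<lambda>_. {0..1}). sum x X = 1}"

lemma continuous_map_Min:
  assumes "finite Y" "Y \<noteq> {}" "\<And>j. j \<in> Y \<Longrightarrow> continuous_map T euclideanreal (f j)"
  shows "continuous_map T euclideanreal (\<lambda>x. Min ((\<lambda>j. f j x) ` Y))"
  using assms
proof (induction Y rule: finite_ne_induct)
  case (singleton y) then show ?case by simp
next
  case (insert y F)
  have e: "(\<lambda>x. Min ((\<lambda>j. f j x) ` insert y F)) = (\<lambda>x. min (f y x) (Min ((\<lambda>j. f j x) ` F)))"
    using insert by (auto simp: Min_insert)
  show ?case unfolding e
    by (intro continuous_map_real_min insert) auto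
qed

lemma attain_max:
  fixes h :: "'a \<Rightarrow> 'b \<Rightarrow> real"
  assumes "finite X" "X \<noteq> {}" "finite Y" "Y \<noteq> {}"
  shows "\<exists>x\<in>dsx X. \<forall>x'\<in>dsx X.
           Min ((\<lambda>j. \<Sum>i\<in>X. x' i * h i j) ` Y) \<le> Min ((\<lambda>j. \<Sum>i\<in>X. x i * h i j) ` Y)"
proof -
  let ?T = "product_topology (\<lambda>_. euclideanreal) X"
  let ?F = "\<lambda>x. Min ((\<lambda>j. \<Sum>i\<in>X. x i * h i j) ` Y)"
  have cK: "compactin ?T (PiE X (\<lambda>_. {0..1}))"
    by (simp add: compactin_PiE)
  have csum: "continuous_map ?T euclideanreal (\<lambda>x. sum x X)"
    by (intro continuous_map_sum assms(1)) (auto intro: continuous_map_product_projection)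
  have cl: "closedin ?T {x \<in> topspace ?T. sum x X \<in> {1}}"
    by (rule closedin_continuous_map_preimage[OF csum]) auto
  have eqS: "dsx X = PiE X (\<lambda>_. {0..1}) \<inter> {x \<in> topspace ?T. sum x X \<in> {1}}"
    unfolding dsx_def by (auto simp: PiE_def Pi_def)
  have cS: "compactin ?T (dsx X)"
    unfolding eqS by (rule compact_Int_closedin[OF cK cl])
  have cF: "continuous_map ?T euclideanreal ?F"
    by (intro continuous_map_Min assms continuous_map_sum continuous_map_real_mult
          continuous_map_product_projection) (auto)
  have "compactin euclideanreal (?F ` dsx X)"
    by (rule image_compactin[OF cS cF])
  hence cpt: "compact (?F ` dsx X)" by simp
  obtain i0 where i0: "i0 \<in> X" using assms(2) by auto
  have "restrict (\<lambda>i. if i = i0 then 1 else 0) X \<in> dsx X"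
    using i0 assms(1) by (auto simp: dsx_def sum.delta)
  hence ne: "?F ` dsx X \<noteq> {}" by auto
  from compact_attains_sup[OF cpt ne] show ?thesis by auto
qed


lemma dsx_nonneg: "x \<in> dsx X \<Longrightarrow> i \<in> X \<Longrightarrow> 0 \<le> x i"
  by (auto simp: dsx_def PiE_def Pi_def)

lemma dsx_sum: "x \<in> dsx X \<Longrightarrow> sum x X = 1"
  by (auto simp: dsx_def)

lemma dsx_comb:
  assumes "x \<in> dsx X" "x' \<in> dsx X" "0 \<le> e" "e \<le> 1" "finite X"
  shows "restrict (\<lambda>i. (1-e)*x i + e*x' i) X \<in> dsx X"
proof -
  have "\<forall>i\<in>X. 0 \<le> (1-e)*x i + e*x' i" using assms dsx_nonneg[OF assms(1)] dsx_nonneg[OF assms(2)] by (auto intro!: add_nonneg_nonneg mult_nonneg_nonneg)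
  moreover have "(\<Sum>i\<in>X. (1-e)*x i + e*x' i) = 1"
    using assms by (simp add: sum.distrib sum_distrib_left[symmetric] dsx_sum)
  moreover have "\<forall>i\<in>X. (1-e)*x i + e*x' i \<le> 1"
  proof
    fix i assume i: "i \<in> X"
    have "\<forall>k\<in>X. 0 \<le> (1-e)*x k + e*x' k" using assms dsx_nonneg[OF assms(1)] dsx_nonneg[OF assms(2)] by (auto intro!: add_nonneg_nonneg mult_nonneg_nonneg)
    hence "(1-e)*x i + e*x' i \<le> (\<Sum>k\<in>X. (1-e)*x k + e*x' k)"
      using i assms(5) by (intro member_le_sum) auto
    with calculation show "(1-e)*x i + e*x' i \<le> 1" by simp
  qed
  ultimately show ?thesis unfolding dsx_def by (auto simp: PiE_def Pi_def)
qed

lemma comb_sum: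
  fixes x x' g :: "_ \<Rightarrow> real"
  shows "(\<Sum>i\<in>X. restrict (\<lambda>i. (1-e)*x i + e*x' i) X i * g i) =
     (1-e) * (\<Sum>i\<in>X. x i * g i) + e * (\<Sum>i\<in>X. x' i * g i)"
  by (simp add: ring_distribs sum.distrib sum_distrib_left mult.assoc)

lemma dsx_ext:
  assumes "x \<in> dsx X'" "X' \<subseteq> X" "finite X"
  shows "restrict (\<lambda>i. if i \<in> X' then x i else 0) X \<in> dsx X"
proof -
  have fX': "finite X'" using assms finite_subset by blast
  have "(\<Sum>i\<in>X. if i \<in> X' then x i else 0) = (\<Sum>i\<in>X'. x i)"
    using assms(2,3) by (simp add: sum.If_cases Int_absorb1)
  thus ?thesis using assms unfolding dsx_def by (auto simp: PiE_def Pi_def)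
qed

lemma ext_sum:
  fixes x g :: "_ \<Rightarrow> real"
  assumes "X' \<subseteq> X" "finite X"
  shows "(\<Sum>i\<in>X. restrict (\<lambda>i. if i \<in> X' then x i else 0) X i * g i) = (\<Sum>i\<in>X'. x i * g i)"
proof -
  have "(\<Sum>i\<in>X. restrict (\<lambda>i. if i \<in> X' then x i else 0) X i * g i) = (\<Sum>i\<in>X. if i \<in> X' then x i * g i else 0)"
    by (intro sum.cong) auto
  also have "\<dots> = (\<Sum>i\<in>X'. x i * g i)"
    using assms by (simp add: sum.If_cases Int_absorb1)
  finally show ?thesis .
qed

lemma dsx_avg_ge:
  assumes "y \<in> dsx Y" "finite Y" "\<forall>j\<in>Y. c \<le> a j"
  shows "c \<le> (\<Sum>j\<in>Y. y j * a j)"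
proof -
  have "(\<Sum>j\<in>Y. y j * c) \<le> (\<Sum>j\<in>Y. y j * a j)"
    using assms by (intro sum_mono mult_left_mono) (auto simp: dsx_nonneg)
  thus ?thesis using dsx_sum[OF assms(1)] by (simp add: sum_distrib_right[symmetric])
qed

lemma dsx_avg_le:
  assumes "y \<in> dsx Y" "finite Y" "\<forall>j\<in>Y. a j \<le> c"
  shows "(\<Sum>j\<in>Y. y j * a j) \<le> c"
proof -
  have "(\<Sum>j\<in>Y. y j * a j) \<le> (\<Sum>j\<in>Y. y j * c)"
    using assms by (intro sum_mono mult_left_mono) (auto simp: dsx_nonneg)
  thus ?thesis using dsx_sum[OF assms(1)] by (simp add: sum_distrib_right[symmetric])
qed

lemma small_eps:
  fixes d M :: real
  assumes "0 < d" "0 \<le> M"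
  shows "\<exists>e. 0 < e \<and> e \<le> 1 \<and> e * M < d"
proof -
  define e where "e = min 1 (d / (2*(M+1)))"
  have e0: "0 < e" using assms by (simp add: e_def)
  have e1: "e \<le> d / (2*(M+1))" by (simp add: e_def)
  have "e * M \<le> d / (2*(M+1)) * M" using e1 assms by (intro mult_right_mono) auto
  also have "\<dots> = d * (M / (2*(M+1)))" by simp
  also have "\<dots> < d * 1"
  proof (rule mult_strict_left_mono)
    show "M / (2*(M+1)) < 1" using assms by (simp add: divide_less_eq)
  qed (use assms in auto)
  also have "\<dots> = d" by simp
  finally show ?thesis using e0 by (intro exI[of _ e]) (auto simp: e_def)
qed

lemma bilinear_swap:
  fixes x y :: "_ \<Rightarrow> real"
  shows "(\<Sum>j\<in>Y. y j * (\<Sum>i\<in>X. x i * g i j)) = (\<Sum>i\<in>X. x i * (\<Sum>j\<in>Y. y j * g i j))"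
  unfolding sum_distrib_left by (subst sum.swap) (simp add: mult.left_commute)


lemma minimax:
  fixes g :: "'a \<Rightarrow> 'b \<Rightarrow> real"
  assumes "finite X" "X \<noteq> {}" "finite Y" "Y \<noteq> {}"
  shows "\<exists>x\<in>dsx X. \<exists>y\<in>dsx Y. \<exists>v. (\<forall>j\<in>Y. v \<le> (\<Sum>i\<in>X. x i * g i j)) \<and>
            (\<forall>i\<in>X. (\<Sum>j\<in>Y. y j * g i j) \<le> v)"
  using assms
proof (induction "card X + card Y" arbitrary: X Y rule: less_induct)
  case less
  note fin = less.prems
  obtain xs where xs: "xs \<in> dsx X" and xsmax: "\<forall>x'\<in>dsx X. Min ((\<lambda>j. \<Sum>i\<in>X. x' i * g i j) ` Y) \<le> Min ((\<lambda>j. \<Sum>i\<in>X. xs i * g i j) ` Y)"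
    using attain_max[OF less.prems] by blast
  obtain ys where ys: "ys \<in> dsx Y" and ysmax: "\<forall>y'\<in>dsx Y. Min ((\<lambda>i. \<Sum>j\<in>Y. y' j * (- g i j)) ` X) \<le> Min ((\<lambda>i. \<Sum>j\<in>Y. ys j * (- g i j)) ` X)"
    using attain_max[of Y X "\<lambda>j i. - g i j"] less.prems by blast
  define L where "L x j = (\<Sum>i\<in>X. x i * g i j)" for x j
  define R where "R y i = (\<Sum>j\<in>Y. y j * g i j)" for y i
  have negR: "(\<Sum>j\<in>Y. y j * (- g i j)) = - R y i" for y i by (simp add: R_def sum_negf)
  define v1 where "v1 = Min ((\<lambda>j. L xs j) ` Y)"
  define v2 where "v2 = - Min ((\<lambda>i. - R ys i) ` X)"
  have Lge: "\<forall>j\<in>Y. v1 \<le> L xs j" unfolding v1_def using fin by auto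
  have Rle: "\<forall>i\<in>X. R ys i \<le> v2"
  proof
    fix i assume "i \<in> X"
    hence "Min ((\<lambda>i. - R ys i) ` X) \<le> - R ys i" using fin by auto
    thus "R ys i \<le> v2" unfolding v2_def by simp
  qed
  have xsopt: "Min ((\<lambda>j. L x j) ` Y) \<le> v1" if "x \<in> dsx X" for x
    using xsmax that unfolding v1_def L_def by blast
  have ysopt: "Min ((\<lambda>i. - R y i) ` X) \<le> - v2" if "y \<in> dsx Y" for y
    using ysmax that unfolding v2_def negR by auto
  have B: "(\<Sum>j\<in>Y. ys j * L xs j) = (\<Sum>i\<in>X. xs i * R ys i)"
    unfolding L_def R_def by (rule bilinear_swap)
  have "v1 \<le> (\<Sum>j\<in>Y. ys j * L xs j)" by (rule dsx_avg_ge[OF ys fin(3) Lge])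
  moreover have "(\<Sum>i\<in>X. xs i * R ys i) \<le> v2" by (rule dsx_avg_le[OF xs fin(1) Rle])
  ultimately have v12: "v1 \<le> v2" using B by linarith
  show ?case
  proof (cases "v2 \<le> v1")
    case True
    show ?thesis
    proof (intro bexI[OF _ xs] bexI[OF _ ys] exI[of _ v1] conjI)
      show "\<forall>j\<in>Y. v1 \<le> (\<Sum>i\<in>X. xs i * g i j)" using Lge unfolding L_def .
      show "\<forall>i\<in>X. (\<Sum>j\<in>Y. ys j * g i j) \<le> v1" using Rle True unfolding R_def by force
    qed
  next
    case False
    hence lt: "v1 < v2" by simp
    show ?thesis
    proof (cases "\<exists>j0\<in>Y. v1 < L xs j0")
      case True
      then obtain j0 where j0: "j0 \<in> Y" "v1 < L xs j0" by blast
      define Y' where "Y' = Y - {j0}"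
      have Y'ne: "Y' \<noteq> {}"
      proof
        assume "Y' = {}"
        hence "Y = {j0}" using j0 unfolding Y'_def by auto
        hence "v1 = L xs j0" unfolding v1_def by simp
        thus False using j0 by simp
      qed
      have Y'Y: "Y' \<subseteq> Y" unfolding Y'_def by auto
      have fY': "finite Y'" using fin(3) Y'Y finite_subset by blast
      have "card X + card Y' < card X + card Y"
        using card_Diff1_less[OF fin(3) j0(1)] unfolding Y'_def by simp
      from less.hyps[OF this fin(1,2) fY' Y'ne] obtain x' y' v' where
        x': "x' \<in> dsx X" and y': "y' \<in> dsx Y'" and
        hx': "\<forall>j\<in>Y'. v' \<le> (\<Sum>i\<in>X. x' i * g i j)" and
        hy': "\<forall>i\<in>X. (\<Sum>j\<in>Y'. y' j * g i j) \<le> v'" by blast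
      define y'' where "y'' = restrict (\<lambda>j. if j \<in> Y' then y' j else 0) Y"
      have y'': "y'' \<in> dsx Y" unfolding y''_def by (rule dsx_ext[OF y' Y'Y fin(3)])
      have "R y'' i = (\<Sum>j\<in>Y'. y' j * g i j)" for i
        unfolding R_def y''_def by (rule ext_sum[OF Y'Y fin(3)])
      hence Ry'': "\<forall>i\<in>X. R y'' i \<le> v'" using hy' by simp
      have "- v' \<le> Min ((\<lambda>i. - R y'' i) ` X)"
        using Ry'' fin by (auto simp: Min_ge_iff)
      with ysopt[OF y''] have v2v': "v2 \<le> v'" by linarith
      have Lx': "\<forall>j\<in>Y'. v' \<le> L x' j" using hx' unfolding L_def .
      define M where "M = \<bar>L x' j0 - L xs j0\<bar>"
      obtain e where e: "0 < e" "e \<le> 1" "e * M < L xs j0 - v1"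
        using small_eps[of "L xs j0 - v1" M] j0 unfolding M_def by auto
      define xe where "xe = restrict (\<lambda>i. (1-e)*xs i + e*x' i) X"
      have xe: "xe \<in> dsx X" unfolding xe_def using dsx_comb[OF xs x'] e fin by auto
      have Lxe: "L xe j = (1-e) * L xs j + e * L x' j" for j
        unfolding L_def xe_def by (rule comb_sum)
      have allgt: "\<forall>j\<in>Y. v1 < L xe j"
      proof
        fix j assume jY: "j \<in> Y"
        show "v1 < L xe j"
        proof (cases "j = j0")
          case True
          have "e * (- (L x' j0 - L xs j0)) \<le> e * M"
            using e unfolding M_def by (intro mult_left_mono) auto
          hence "- (e * M) \<le> e * (L x' j0 - L xs j0)" by (simp add: algebra_simps)
          hence "L xs j0 - e * M \<le> L xe j0" unfolding Lxe by (simp add: algebra_simps)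
          thus ?thesis using e unfolding True by linarith
        next
          case False
          hence jY': "j \<in> Y'" using jY unfolding Y'_def by auto
          have "(1-e) * v1 \<le> (1-e) * L xs j" using Lge jY e by (intro mult_left_mono) auto
          moreover have "e * v' \<le> e * L x' j" using Lx' jY' e by (intro mult_left_mono) auto
          moreover have "e * v1 < e * v'" using e lt v2v' by (intro mult_strict_left_mono) auto
          ultimately show ?thesis unfolding Lxe by (simp add: algebra_simps)
        qed
      qed
      have "v1 < Min ((\<lambda>j. L xe j) ` Y)" using allgt fin by (auto simp: Min_gr_iff)
      with xsopt[OF xe] show ?thesis by linarith
    next
      case False
      hence Leq: "\<forall>j\<in>Y. L xs j = v1" using Lge by force
      have "\<exists>i0\<in>X. R ys i0 < v2"
      proof (rule ccontr)
        assume "\<not> (\<exists>i0\<in>X. R ys i0 < v2)"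
        hence Req: "\<forall>i\<in>X. R ys i = v2" using Rle by force
        have "(\<Sum>i\<in>X. xs i * R ys i) = (\<Sum>i\<in>X. xs i * v2)" using Req by (intro sum.cong) auto
        also have "\<dots> = v2" using dsx_sum[OF xs] by (simp add: sum_distrib_right[symmetric])
        finally have 1: "(\<Sum>i\<in>X. xs i * R ys i) = v2" .
        have "(\<Sum>j\<in>Y. ys j * L xs j) = (\<Sum>j\<in>Y. ys j * v1)" using Leq by (intro sum.cong) auto
        also have "\<dots> = v1" using dsx_sum[OF ys] by (simp add: sum_distrib_right[symmetric])
        finally have 2: "(\<Sum>j\<in>Y. ys j * L xs j) = v1" .
        show False using 1 2 B lt by simp
      qed
      then obtain i0 where i0: "i0 \<in> X" "R ys i0 < v2" by blast
      define X' where "X' = X - {i0}"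
      have X'ne: "X' \<noteq> {}"
      proof
        assume "X' = {}"
        hence "X = {i0}" using i0 unfolding X'_def by auto
        hence "v2 = R ys i0" unfolding v2_def by simp
        thus False using i0 by simp
      qed
      have X'X: "X' \<subseteq> X" unfolding X'_def by auto
      have fX': "finite X'" using fin(1) X'X finite_subset by blast
      have "card X' + card Y < card X + card Y"
        using card_Diff1_less[OF fin(1) i0(1)] unfolding X'_def by simp
      from less.hyps[OF this fX' X'ne fin(3,4)] obtain x' y' v' where
        x': "x' \<in> dsx X'" and y': "y' \<in> dsx Y" and
        hx': "\<forall>j\<in>Y. v' \<le> (\<Sum>i\<in>X'. x' i * g i j)" and
        hy': "\<forall>i\<in>X'. (\<Sum>j\<in>Y. y' j * g i j) \<le> v'" by blast
      define x'' where "x'' = restrict (\<lambda>i. if i \<in> X' then x' i else 0) X"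
      have x'': "x'' \<in> dsx X" unfolding x''_def by (rule dsx_ext[OF x' X'X fin(1)])
      have "L x'' j = (\<Sum>i\<in>X'. x' i * g i j)" for j
        unfolding L_def x''_def by (rule ext_sum[OF X'X fin(1)])
      hence Lx'': "\<forall>j\<in>Y. v' \<le> L x'' j" using hx' by simp
      have "v' \<le> Min ((\<lambda>j. L x'' j) ` Y)"
        using Lx'' fin by (auto simp: Min_ge_iff)
      with xsopt[OF x''] have v'v1: "v' \<le> v1" by linarith
      have Ry': "\<forall>i\<in>X'. R y' i \<le> v'" using hy' unfolding R_def .
      define M where "M = \<bar>R y' i0 - R ys i0\<bar>"
      obtain e where e: "0 < e" "e \<le> 1" "e * M < v2 - R ys i0"
        using small_eps[of "v2 - R ys i0" M] i0 unfolding M_def by auto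
      define ye where "ye = restrict (\<lambda>j. (1-e)*ys j + e*y' j) Y"
      have ye: "ye \<in> dsx Y" unfolding ye_def using dsx_comb[OF ys y'] e fin by auto
      have Rye: "R ye i = (1-e) * R ys i + e * R y' i" for i
        unfolding R_def ye_def by (rule comb_sum)
      have alllt: "\<forall>i\<in>X. R ye i < v2"
      proof
        fix i assume iX: "i \<in> X"
        show "R ye i < v2"
        proof (cases "i = i0")
          case True
          have "e * (R y' i0 - R ys i0) \<le> e * M"
            using e unfolding M_def by (intro mult_left_mono) auto
          hence "R ye i0 \<le> R ys i0 + e * M" unfolding Rye by (simp add: algebra_simps)
          thus ?thesis using e unfolding True by linarith
        next
          case False
          hence iX': "i \<in> X'" using iX unfolding X'_def by auto
          have "(1-e) * R ys i \<le> (1-e) * v2" using Rle iX e by (intro mult_left_mono) auto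
          moreover have "e * R y' i \<le> e * v'" using Ry' iX' e by (intro mult_left_mono) auto
          moreover have "e * v' < e * v2" using e lt v'v1 by (intro mult_strict_left_mono) auto
          ultimately show ?thesis unfolding Rye by (simp add: algebra_simps)
        qed
      qed
      have "- v2 < Min ((\<lambda>i. - R ye i) ` X)" using alllt fin by (auto simp: Min_gr_iff)
      with ysopt[OF ye] show ?thesis by linarith
    qed
  qed
qed

lemma E_sum:
  fixes f :: "'a \<Rightarrow> real"
  assumes "finite A" "set_pmf s \<subseteq> A"
  shows "measure_pmf.expectation s f = (\<Sum>a\<in>A. pmf s a * f a)"
  using assms by (subst integral_measure_pmf_real[of A]) (auto simp: mult.commute)

lemma E_pair:
  fixes h :: "'a \<Rightarrow> 'b \<Rightarrow> real"
  assumes "finite A" "finite B" "set_pmf s \<subseteq> A" "set_pmf t \<subseteq> B"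
  shows "measure_pmf.expectation (pair_pmf s t) (\<lambda>(a,b). h a b) =
           (\<Sum>a\<in>A. pmf s a * (\<Sum>b\<in>B. pmf t b * h a b))"
proof -
  have "measure_pmf.expectation (pair_pmf s t) (\<lambda>(a,b). h a b) =
          (\<Sum>ab\<in>A \<times> B. pmf (pair_pmf s t) ab * (case ab of (a,b) \<Rightarrow> h a b))"
    using assms by (intro E_sum) auto
  also have "\<dots> = (\<Sum>a\<in>A. \<Sum>b\<in>B. pmf s a * (pmf t b * h a b))"
    unfolding sum.cartesian_product by (intro sum.cong) (auto simp: pmf_pair)
  also have "\<dots> = (\<Sum>a\<in>A. pmf s a * (\<Sum>b\<in>B. pmf t b * h a b))"
    by (simp add: sum_distrib_left)
  finally show ?thesis .
qed

lemma E_support_eq: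
  fixes f :: "'a \<Rightarrow> real"
  assumes A: "finite A" "set_pmf s \<subseteq> A" and le: "\<forall>a\<in>A. f a \<le> c"
    and ceq: "c = (\<Sum>a\<in>A. pmf s a * f a)" and a: "a \<in> set_pmf s"
  shows "f a = c"
proof -
  have s1: "(\<Sum>a\<in>A. pmf s a) = 1" by (rule sum_pmf_eq_1[OF A])
  have "(\<Sum>a\<in>A. pmf s a * (c - f a)) = (\<Sum>a\<in>A. pmf s a * c) - (\<Sum>a\<in>A. pmf s a * f a)"
    by (simp add: right_diff_distrib sum_subtractf)
  also have "(\<Sum>a\<in>A. pmf s a * c) = c" using s1 by (simp add: sum_distrib_right[symmetric])
  finally have z: "(\<Sum>a\<in>A. pmf s a * (c - f a)) = 0" using ceq by simp
  have nn: "\<And>x. x \<in> A \<Longrightarrow> 0 \<le> pmf s x * (c - f x)"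
    using le by (simp add: mult_nonneg_nonneg)
  have aA: "a \<in> A" using A(2) a by blast
  have "pmf s a * (c - f a) = 0" using iffD1[OF sum_nonneg_eq_0_iff[OF A(1)], OF nn z] aA by blast
  moreover have "pmf s a > 0" using a by (rule pmf_positive)
  ultimately show ?thesis by simp
qed

lemma sum_pmf_le:
  fixes f :: "'a \<Rightarrow> real"
  assumes "finite A" "set_pmf s \<subseteq> A" "\<forall>a\<in>A. f a \<le> c"
  shows "(\<Sum>a\<in>A. pmf s a * f a) \<le> c"
proof -
  have "(\<Sum>a\<in>A. pmf s a * f a) \<le> (\<Sum>a\<in>A. pmf s a * c)"
    using assms by (intro sum_mono mult_left_mono) auto
  also have "\<dots> = c" using sum_pmf_eq_1[OF assms(1,2)] by (simp add: sum_distrib_right[symmetric])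
  finally show ?thesis .
qed

lemma sum_pmf_ge:
  fixes f :: "'a \<Rightarrow> real"
  assumes "finite A" "set_pmf s \<subseteq> A" "\<forall>a\<in>A. c \<le> f a"
  shows "c \<le> (\<Sum>a\<in>A. pmf s a * f a)"
proof -
  have "(\<Sum>a\<in>A. pmf s a * c) \<le> (\<Sum>a\<in>A. pmf s a * f a)"
    using assms by (intro sum_mono mult_left_mono) auto
  moreover have "(\<Sum>a\<in>A. pmf s a * c) = c" using sum_pmf_eq_1[OF assms(1,2)] by (simp add: sum_distrib_right[symmetric])
  ultimately show ?thesis by simp
qed

lemma sum_pmf_ge_supp:
  fixes f :: "'a \<Rightarrow> real"
  assumes "finite A" "set_pmf s \<subseteq> A" "\<forall>a\<in>set_pmf s. c \<le> f a"
  shows "c \<le> (\<Sum>a\<in>A. pmf s a * f a)"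
proof -
  have "(\<Sum>a\<in>A. pmf s a * c) \<le> (\<Sum>a\<in>A. pmf s a * f a)"
  proof (intro sum_mono)
    fix a assume "a \<in> A"
    show "pmf s a * c \<le> pmf s a * f a"
      using assms by (cases "a \<in> set_pmf s") (auto intro: mult_left_mono simp: set_pmf_iff)
  qed
  moreover have "(\<Sum>a\<in>A. pmf s a * c) = c" using sum_pmf_eq_1[OF assms(1,2)] by (simp add: sum_distrib_right[symmetric])
  ultimately show ?thesis by simp
qed

lemma sum_pmf_le_supp:
  fixes f :: "'a \<Rightarrow> real"
  assumes "finite A" "set_pmf s \<subseteq> A" "\<forall>a\<in>set_pmf s. f a \<le> c"
  shows "(\<Sum>a\<in>A. pmf s a * f a) \<le> c"
  using sum_pmf_ge_supp[of A s "-c" "\<lambda>a. - f a"] assms by (simp add: sum_negf)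

lemma mod_inj_aux:
  fixes x y a n :: nat
  assumes "x < n" "y < n" "(x + a) mod n = (y + a) mod n"
  shows "x = y"
proof -
  { fix x y :: nat assume xy: "x \<le> y" "x < n" "y < n" "(x + a) mod n = (y + a) mod n"
    have "n dvd (y + a) - (x + a)" using xy mod_eq_dvd_iff_nat[of "x+a" "y+a" n] by simp
    hence "n dvd y - x" by simp
    moreover have "y - x < n" using xy by simp
    ultimately have "y - x = 0" using dvd_imp_le by (metis gr0I leD)
    hence "x = y" using xy by simp }
  from this[of x y] this[of y x] assms show ?thesis by (cases "x \<le> y") auto
qed

lemma cw_sub: "xs \<noteq> [] \<Longrightarrow> cyc_window xs b k \<subseteq> set xs"
  unfolding cyc_window_def by auto

lemma cw_image: "cyc_window xs b k = (\<lambda>j. xs ! ((k + j) mod length xs)) ` {..<b}"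
  unfolding cyc_window_def by auto

lemma cw_card:
  assumes "distinct xs" "b \<le> length xs"
  shows "card (cyc_window xs b k) = b"
proof -
  let ?n = "length xs"
  have "inj_on (\<lambda>j. xs ! ((k + j) mod ?n)) {..<b}"
  proof (rule inj_onI)
    fix j j' assume j: "j \<in> {..<b}" "j' \<in> {..<b}" and eq: "xs ! ((k + j) mod ?n) = xs ! ((k + j') mod ?n)"
    have n0: "0 < ?n" using j assms by auto
    have "(k + j) mod ?n = (k + j') mod ?n"
      using eq assms(1) n0 by (simp add: nth_eq_iff_index_eq)
    hence "(j + k) mod ?n = (j' + k) mod ?n" by (simp add: add.commute)
    thus "j = j'" using j assms by (intro mod_inj_aux[of j ?n j' k]) auto
  qed
  thus ?thesis unfolding cw_image by (simp add: card_image)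
qed

lemma cw_count:
  assumes "distinct xs" "b \<le> length xs" "i < length xs"
  shows "(\<Sum>k<length xs. (if xs ! i \<in> cyc_window xs b k then 1 else 0 :: real)) = real b"
proof -
  let ?n = "length xs"
  have n0: "0 < ?n" using assms by auto
  have mem: "(if xs ! i \<in> cyc_window xs b k then 1 else 0 :: real) =
               (\<Sum>j<b. if (k + j) mod ?n = i then 1 else 0)" for k
  proof -
    have iff: "xs ! i \<in> cyc_window xs b k \<longleftrightarrow> (\<exists>j<b. (k + j) mod ?n = i)"
      unfolding cyc_window_def using assms n0
      by (auto simp: nth_eq_iff_index_eq)
    have atmost: "j = j'" if "j < b" "j' < b" "(k + j) mod ?n = i" "(k + j') mod ?n = i" for j j'
      using that assms by (intro mod_inj_aux[of j ?n j' k]) (auto simp: add.commute)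
    show ?thesis
    proof (cases "\<exists>j<b. (k + j) mod ?n = i")
      case True
      then obtain j0 where j0: "j0 < b" "(k + j0) mod ?n = i" by blast
      have "(\<Sum>j<b. if (k + j) mod ?n = i then 1 else 0 :: real) = (\<Sum>j<b. if j = j0 then 1 else 0)"
        using atmost j0 by (intro sum.cong) auto
      also have "\<dots> = 1" using j0 by simp
      finally show ?thesis using iff True by simp
    next
      case False
      thus ?thesis using iff by simp
    qed
  qed
  have one: "(\<Sum>k<?n. if (k + j) mod ?n = i then 1 else 0 :: real) = 1" for j
  proof -
    let ?f = "\<lambda>k. (k + j) mod ?n"
    have inj: "inj_on ?f {..<?n}"
      by (rule inj_onI) (auto intro: mod_inj_aux)
    have img: "?f ` {..<?n} = {..<?n}"
      using inj n0 by (intro endo_inj_surj) auto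
    have "(\<Sum>k<?n. if ?f k = i then 1 else 0 :: real) = (\<Sum>m\<in>?f ` {..<?n}. if m = i then 1 else 0)"
      by (simp add: sum.reindex[OF inj])
    also have "\<dots> = 1" unfolding img using assms by simp
    finally show ?thesis .
  qed
  have "(\<Sum>k<?n. (if xs ! i \<in> cyc_window xs b k then 1 else 0 :: real)) =
         (\<Sum>k<?n. \<Sum>j<b. if (k + j) mod ?n = i then 1 else 0)"
    using mem by simp
  also have "\<dots> = (\<Sum>j<b. \<Sum>k<?n. if (k + j) mod ?n = i then 1 else 0)"
    by (rule sum.swap)
  also have "\<dots> = real b" using one by simp
  finally show ?thesis .
qed

lemma cyc_set: "xs \<noteq> [] \<Longrightarrow> set_pmf (cyc_strategy xs b) = cyc_window xs b ` {..<length xs}"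
  unfolding cyc_strategy_def by (subst set_map_pmf, subst set_pmf_of_set) auto

lemma cyc_E:
  fixes f :: "'a set \<Rightarrow> real"
  assumes "xs \<noteq> []"
  shows "measure_pmf.expectation (cyc_strategy xs b) f = (\<Sum>k<length xs. f (cyc_window xs b k)) / length xs"
  unfolding cyc_strategy_def using assms by (subst integral_map_pmf, subst integral_pmf_of_set) auto

locale gm =
  fixes V :: "'v set" and E :: "'e set" and C :: "'v \<Rightarrow> 'e set"
  assumes finV: "finite V" and finE: "finite E" and CE: "\<forall>i\<in>V. C i \<subseteq> E"
    and Ecov: "\<forall>e\<in>E. \<exists>i\<in>V. e \<in> C i"
begin

lemma cover_sub: "S \<subseteq> V \<Longrightarrow> cover_set C S \<subseteq> E"
  using CE unfolding cover_set_def by auto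

lemma fin_cover: "S \<subseteq> V \<Longrightarrow> finite (cover_set C S)"
  using cover_sub finE finite_subset by blast

lemma A1_sub: "A1 V b \<subseteq> Pow V" unfolding A1_def by auto
lemma A2_sub: "A2 E b \<subseteq> Pow E" unfolding A2_def by auto
lemma fin_A1: "finite (A1 V b)" using A1_sub finV finite_subset by blast
lemma fin_A2: "finite (A2 E b)" using A2_sub finE finite_subset by blast
lemma finPV: "finite (Pow V)" using finV by simp
lemma finPE: "finite (Pow E)" using finE by simp

lemma Fdet_T:
  assumes "T \<subseteq> E"
  shows "real (Fdet C S T) = (\<Sum>e\<in>T. if e \<in> cover_set C S then 1 else 0)"
proof -
  have fT: "finite T" using assms finE finite_subset by blast
  show ?thesis unfolding Fdet_def using fT by (simp add: sum.If_cases Int_commute)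
qed

lemma Fdet_S:
  assumes "S \<subseteq> V"
  shows "real (Fdet C S T) = (\<Sum>e\<in>cover_set C S. if e \<in> T then 1 else 0)"
proof -
  show ?thesis unfolding Fdet_def using fin_cover[OF assms] by (simp add: sum.If_cases)
qed

definition Wf :: "'e set pmf \<Rightarrow> 'v set \<Rightarrow> real" where
  "Wf t S = (\<Sum>T\<in>Pow E. pmf t T * real (Fdet C S T))"
definition Gf :: "'v set pmf \<Rightarrow> 'e set \<Rightarrow> real" where
  "Gf s T = (\<Sum>S\<in>Pow V. pmf s S * real (Fdet C S T))"
definition Zf :: "'v set pmf \<Rightarrow> 'e set \<Rightarrow> real" where
  "Zf s T = real (card T) - Gf s T"
definition pf :: "'v set pmf \<Rightarrow> 'e \<Rightarrow> real" where
  "pf s e = (\<Sum>S\<in>Pow V. pmf s S * (if e \<in> cover_set C S then 1 else 0))"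
definition qf :: "'e set pmf \<Rightarrow> 'e \<Rightarrow> real" where
  "qf t e = (\<Sum>T\<in>Pow E. pmf t T * (if e \<in> T then 1 else 0))"

lemma U1_gen:
  assumes "set_pmf s \<subseteq> A" "A \<subseteq> Pow V" "set_pmf t \<subseteq> Pow E"
  shows "U1 C s t = (\<Sum>S\<in>A. pmf s S * Wf t S)"
proof -
  have fA: "finite A" using assms finPV finite_subset by blast
  show ?thesis unfolding U1_def Wf_def
    by (rule E_pair[OF fA finPE assms(1,3), of "\<lambda>S T. real (Fdet C S T)"])
qed

lemma U2_gen:
  assumes "set_pmf s \<subseteq> Pow V" "set_pmf t \<subseteq> B" "B \<subseteq> Pow E"
  shows "U2 C s t = (\<Sum>T\<in>B. pmf t T * Zf s T)"
proof -
  have fB: "finite B" using assms finPE finite_subset by blast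
  have s1: "(\<Sum>S\<in>Pow V. pmf s S) = 1" by (rule sum_pmf_eq_1[OF finPV assms(1)])
  have "measure_pmf.expectation (pair_pmf s t) (\<lambda>(S, T). real (card T)) =
          (\<Sum>S\<in>Pow V. pmf s S * (\<Sum>T\<in>B. pmf t T * real (card T)))"
    by (rule E_pair[OF finPV fB assms(1,2), of "\<lambda>S T. real (card T)"])
  also have "\<dots> = (\<Sum>T\<in>B. pmf t T * real (card T))"
    using s1 by (simp add: sum_distrib_right[symmetric])
  finally have e1: "measure_pmf.expectation (pair_pmf s t) (\<lambda>(S, T). real (card T)) =
                     (\<Sum>T\<in>B. pmf t T * real (card T))" .
  have "U1 C s t = (\<Sum>S\<in>Pow V. pmf s S * (\<Sum>T\<in>B. pmf t T * real (Fdet C S T)))"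
    unfolding U1_def by (rule E_pair[OF finPV fB assms(1,2), of "\<lambda>S T. real (Fdet C S T)"])
  also have "\<dots> = (\<Sum>T\<in>B. pmf t T * Gf s T)"
    unfolding Gf_def sum_distrib_left by (subst sum.swap) (simp add: mult.left_commute)
  finally have e2: "U1 C s t = (\<Sum>T\<in>B. pmf t T * Gf s T)" .
  show ?thesis unfolding U2_def e1 e2 Zf_def by (simp add: right_diff_distrib sum_subtractf)
qed

lemma Fdet_E:
  assumes "T \<subseteq> E"
  shows "real (Fdet C S T) = (\<Sum>e\<in>E. (if e \<in> cover_set C S then 1 else 0) * (if e \<in> T then 1 else 0))"
proof -
  have "(\<Sum>e\<in>E. (if e \<in> cover_set C S then 1 else 0) * (if e \<in> T then 1 else 0)) =
        (\<Sum>e\<in>E. if e \<in> T then (if e \<in> cover_set C S then 1 else 0) else (0::real))"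
    by (intro sum.cong) auto
  also have "\<dots> = (\<Sum>e\<in>E \<inter> T. if e \<in> cover_set C S then 1 else 0)"
    using finE by (simp add: sum.inter_restrict)
  also have "E \<inter> T = T" using assms by auto
  finally show ?thesis using Fdet_T[OF assms] by simp
qed

lemma U1_bilin:
  assumes "set_pmf s \<subseteq> Pow V" "set_pmf t \<subseteq> Pow E"
  shows "U1 C s t = (\<Sum>e\<in>E. pf s e * qf t e)"
proof -
  define a where "a S e = (if e \<in> cover_set C S then 1 else 0 :: real)" for S :: "'v set" and e :: 'e
  define b where "b T e = (if e \<in> T then 1 else 0 :: real)" for T :: "'e set" and e :: 'e
  have "U1 C s t = (\<Sum>S\<in>Pow V. pmf s S * (\<Sum>T\<in>Pow E. pmf t T * real (Fdet C S T)))"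
    unfolding U1_def by (rule E_pair[OF finPV finPE assms, of "\<lambda>S T. real (Fdet C S T)"])
  also have "\<dots> = (\<Sum>S\<in>Pow V. \<Sum>T\<in>Pow E. \<Sum>e\<in>E. (pmf s S * a S e) * (pmf t T * b T e))"
  proof (intro sum.cong refl)
    fix S assume S: "S \<in> Pow V"
    have "pmf s S * (\<Sum>T\<in>Pow E. pmf t T * real (Fdet C S T)) =
          (\<Sum>T\<in>Pow E. pmf s S * (pmf t T * real (Fdet C S T)))"
      by (simp add: sum_distrib_left)
    also have "\<dots> = (\<Sum>T\<in>Pow E. pmf s S * (pmf t T * (\<Sum>e\<in>E. a S e * b T e)))"
    proof (intro sum.cong refl)
      fix T assume "T \<in> Pow E"
      hence "real (Fdet C S T) = (\<Sum>e\<in>E. a S e * b T e)" unfolding a_def b_def by (intro Fdet_E) auto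
      thus "pmf s S * (pmf t T * real (Fdet C S T)) = pmf s S * (pmf t T * (\<Sum>e\<in>E. a S e * b T e))" by simp
    qed
    also have "\<dots> = (\<Sum>T\<in>Pow E. \<Sum>e\<in>E. (pmf s S * a S e) * (pmf t T * b T e))"
      unfolding sum_distrib_left by (simp add: mult_ac)
    finally show "pmf s S * (\<Sum>T\<in>Pow E. pmf t T * real (Fdet C S T)) =
          (\<Sum>T\<in>Pow E. \<Sum>e\<in>E. (pmf s S * a S e) * (pmf t T * b T e))" .
  qed
  also have "\<dots> = (\<Sum>S\<in>Pow V. \<Sum>e\<in>E. \<Sum>T\<in>Pow E. (pmf s S * a S e) * (pmf t T * b T e))"
    by (intro sum.cong refl sum.swap)
  also have "\<dots> = (\<Sum>e\<in>E. \<Sum>S\<in>Pow V. \<Sum>T\<in>Pow E. (pmf s S * a S e) * (pmf t T * b T e))"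
    by (rule sum.swap)
  also have "\<dots> = (\<Sum>e\<in>E. (\<Sum>S\<in>Pow V. pmf s S * a S e) * (\<Sum>T\<in>Pow E. pmf t T * b T e))"
    by (simp add: sum_product)
  also have "\<dots> = (\<Sum>e\<in>E. pf s e * qf t e)"
    unfolding pf_def qf_def a_def b_def ..
  finally show ?thesis .
qed

lemma Ecard_eq:
  assumes "set_pmf t \<subseteq> Pow E"
  shows "(\<Sum>T\<in>Pow E. pmf t T * real (card T)) = (\<Sum>e\<in>E. qf t e)"
proof -
  have "(\<Sum>T\<in>Pow E. pmf t T * real (card T)) = (\<Sum>T\<in>Pow E. \<Sum>e\<in>E. pmf t T * (if e \<in> T then 1 else 0))"
  proof (intro sum.cong refl)
    fix T assume T: "T \<in> Pow E"
    have "real (card T) = (\<Sum>e\<in>E. if e \<in> T then 1 else 0)"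
      using T finE by (simp add: sum.If_cases Int_absorb1)
    thus "pmf t T * real (card T) = (\<Sum>e\<in>E. pmf t T * (if e \<in> T then 1 else 0))"
      by (simp add: sum_distrib_left)
  qed
  also have "\<dots> = (\<Sum>e\<in>E. qf t e)" unfolding qf_def by (rule sum.swap)
  finally show ?thesis .
qed

lemma U2_bilin:
  assumes "set_pmf s \<subseteq> Pow V" "set_pmf t \<subseteq> Pow E"
  shows "U2 C s t = (\<Sum>e\<in>E. qf t e) - U1 C s t"
proof -
  have s1: "(\<Sum>S\<in>Pow V. pmf s S) = 1" by (rule sum_pmf_eq_1[OF finPV assms(1)])
  have "measure_pmf.expectation (pair_pmf s t) (\<lambda>(S, T). real (card T)) =
          (\<Sum>S\<in>Pow V. pmf s S * (\<Sum>T\<in>Pow E. pmf t T * real (card T)))"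
    by (rule E_pair[OF finPV finPE assms, of "\<lambda>S T. real (card T)"])
  also have "\<dots> = (\<Sum>T\<in>Pow E. pmf t T * real (card T))"
    using s1 by (simp add: sum_distrib_right[symmetric])
  finally show ?thesis unfolding U2_def using Ecard_eq[OF assms(2)] by simp
qed

lemma Wf_eq:
  assumes "S \<subseteq> V" "set_pmf t \<subseteq> Pow E"
  shows "Wf t S = (\<Sum>e\<in>cover_set C S. qf t e)"
proof -
  have "Wf t S = (\<Sum>T\<in>Pow E. \<Sum>e\<in>cover_set C S. pmf t T * (if e \<in> T then 1 else 0))"
    unfolding Wf_def using assms(1) by (simp add: Fdet_S sum_distrib_left)
  also have "\<dots> = (\<Sum>e\<in>cover_set C S. qf t e)" unfolding qf_def by (rule sum.swap)
  finally show ?thesis .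
qed

lemma pf_bounds: "set_pmf s \<subseteq> Pow V \<Longrightarrow> 0 \<le> pf s e \<and> pf s e \<le> 1"
proof -
  assume a: "set_pmf s \<subseteq> Pow V"
  have "pf s e \<le> (\<Sum>S\<in>Pow V. pmf s S)" unfolding pf_def by (intro sum_mono) auto
  thus ?thesis using sum_pmf_eq_1[OF finPV a] unfolding pf_def by (auto intro: sum_nonneg)
qed

lemma qf_bounds: "set_pmf t \<subseteq> Pow E \<Longrightarrow> 0 \<le> qf t e \<and> qf t e \<le> 1"
proof -
  assume a: "set_pmf t \<subseteq> Pow E"
  have "qf t e \<le> (\<Sum>T\<in>Pow E. pmf t T)" unfolding qf_def by (intro sum_mono) auto
  thus ?thesis using sum_pmf_eq_1[OF finPE a] unfolding qf_def by (auto intro: sum_nonneg)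
qed

lemma Zf_eq:
  assumes "T \<subseteq> E" "set_pmf s \<subseteq> Pow V"
  shows "Zf s T = (\<Sum>e\<in>T. 1 - pf s e)"
proof -
  have "Gf s T = (\<Sum>S\<in>Pow V. \<Sum>e\<in>T. pmf s S * (if e \<in> cover_set C S then 1 else 0))"
    unfolding Gf_def using assms(1) by (simp add: Fdet_T sum_distrib_left)
  also have "\<dots> = (\<Sum>e\<in>T. pf s e)" unfolding pf_def by (rule sum.swap)
  finally show ?thesis unfolding Zf_def by (simp add: sum_subtractf)
qed

end

context gm begin

lemma valid_sub: "valid_profile V E b1 b2 \<sigma> \<Longrightarrow> set_pmf (fst \<sigma>) \<subseteq> Pow V \<and> set_pmf (snd \<sigma>) \<subseteq> Pow E"
  unfolding valid_profile_def using A1_sub A2_sub by blast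

lemma valid_sub2:
  assumes "valid_profile V E b1 b2 (s,t)"
  shows "set_pmf s \<subseteq> Pow V" "set_pmf t \<subseteq> Pow E"
  using assms A1_sub[of b1] A2_sub[of b2] unfolding valid_profile_def by (simp_all, blast+)

lemma U1_ret: "S \<subseteq> V \<Longrightarrow> set_pmf t \<subseteq> Pow E \<Longrightarrow> U1 C (return_pmf S) t = Wf t S"
  using U1_gen[of "return_pmf S" "{S}" t] by simp

lemma U2_ret: "T \<subseteq> E \<Longrightarrow> set_pmf s \<subseteq> Pow V \<Longrightarrow> U2 C s (return_pmf T) = Zf s T"
  using U2_gen[of s "return_pmf T" "{T}"] by simp

lemma nashW:
  assumes "eps_nash V E C b1 b2 \<epsilon> (s,t)" "S \<in> A1 V b1"
  shows "Wf t S \<le> U1 C s t + \<epsilon>"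
proof -
  have vp: "valid_profile V E b1 b2 (s,t)" using assms(1) unfolding eps_nash_def by auto
  note v = valid_sub2[OF vp]
  have "U1 C (return_pmf S) t \<le> U1 C s t + \<epsilon>" using assms unfolding eps_nash_def by auto
  moreover have "S \<subseteq> V" using assms(2) unfolding A1_def by auto
  ultimately show ?thesis using U1_ret v by simp
qed

lemma nashZ:
  assumes "eps_nash V E C b1 b2 \<epsilon> (s,t)" "T \<in> A2 E b2"
  shows "Zf s T \<le> U2 C s t + \<epsilon>"
proof -
  have vp: "valid_profile V E b1 b2 (s,t)" using assms(1) unfolding eps_nash_def by auto
  note v = valid_sub2[OF vp]
  have "U2 C s (return_pmf T) \<le> U2 C s t + \<epsilon>" using assms unfolding eps_nash_def by auto
  moreover have "T \<subseteq> E" using assms(2) unfolding A2_def by auto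
  ultimately show ?thesis using U2_ret v by simp
qed

lemma nashI:
  assumes "valid_profile V E b1 b2 (s,t)"
    and "\<forall>S\<in>A1 V b1. Wf t S \<le> U1 C s t + \<epsilon>" and "\<forall>T\<in>A2 E b2. Zf s T \<le> U2 C s t + \<epsilon>"
  shows "eps_nash V E C b1 b2 \<epsilon> (s,t)"
proof -
  note v = valid_sub2[OF assms(1)]
  have 1: "U1 C \<tau>1 t \<le> U1 C s t + \<epsilon>" if "set_pmf \<tau>1 \<subseteq> A1 V b1" for \<tau>1
  proof -
    have "U1 C \<tau>1 t = (\<Sum>S\<in>A1 V b1. pmf \<tau>1 S * Wf t S)" using U1_gen[OF that A1_sub v(2)] .
    also have "\<dots> \<le> U1 C s t + \<epsilon>" using assms(2) that fin_A1 by (intro sum_pmf_le) auto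
    finally show ?thesis .
  qed
  have 2: "U2 C s \<tau>2 \<le> U2 C s t + \<epsilon>" if "set_pmf \<tau>2 \<subseteq> A2 E b2" for \<tau>2
  proof -
    have "U2 C s \<tau>2 = (\<Sum>T\<in>A2 E b2. pmf \<tau>2 T * Zf s T)" using U2_gen[OF v(1) that A2_sub] .
    also have "\<dots> \<le> U2 C s t + \<epsilon>" using assms(3) that fin_A2 by (intro sum_pmf_le) auto
    finally show ?thesis .
  qed
  show ?thesis unfolding eps_nash_def using assms(1) 1 2 by auto
qed

lemma nash_suppW:
  assumes "nash V E C b1 b2 (s,t)" "S \<in> set_pmf s"
  shows "Wf t S = U1 C s t"
proof -
  have n: "eps_nash V E C b1 b2 0 (s,t)" using assms unfolding nash_def by simp
  have v: "set_pmf s \<subseteq> A1 V b1" "set_pmf t \<subseteq> Pow E" using n A2_sub unfolding eps_nash_def valid_profile_def by auto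
  show ?thesis
  proof (rule E_support_eq[OF fin_A1 v(1)])
    show "\<forall>a\<in>A1 V b1. Wf t a \<le> U1 C s t" using nashW[OF n] by simp
    show "U1 C s t = (\<Sum>a\<in>A1 V b1. pmf s a * Wf t a)" by (rule U1_gen[OF v(1) A1_sub v(2)])
  qed (rule assms(2))
qed

lemma nash_suppZ:
  assumes "nash V E C b1 b2 (s,t)" "T \<in> set_pmf t"
  shows "Zf s T = U2 C s t"
proof -
  have n: "eps_nash V E C b1 b2 0 (s,t)" using assms unfolding nash_def by simp
  have v: "set_pmf s \<subseteq> Pow V" "set_pmf t \<subseteq> A2 E b2" using n A1_sub unfolding eps_nash_def valid_profile_def by auto
  show ?thesis
  proof (rule E_support_eq[OF fin_A2 v(2)])
    show "\<forall>a\<in>A2 E b2. Zf s a \<le> U2 C s t" using nashZ[OF n] by simp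
    show "U2 C s t = (\<Sum>a\<in>A2 E b2. pmf t a * Zf s a)" by (rule U2_gen[OF v(1) v(2) A2_sub])
  qed (rule assms(2))
qed

lemma packing_card:
  assumes "is_set_packing V E C T" "S \<subseteq> V"
  shows "card (cover_set C S \<inter> T) \<le> card S"
proof -
  have fS: "finite S" using assms(2) finV finite_subset by blast
  have eq: "cover_set C S \<inter> T = (\<Union>i\<in>S. C i \<inter> T)" unfolding cover_set_def by auto
  have "card (cover_set C S \<inter> T) \<le> (\<Sum>i\<in>S. card (C i \<inter> T))" unfolding eq by (rule card_UN_le[OF fS])
  also have "\<dots> \<le> (\<Sum>i\<in>S. 1)" using assms unfolding is_set_packing_def by (intro sum_mono) auto
  finally show ?thesis by simp
qed

lemma cyc_A1:
  assumes "distinct xs" "set xs \<subseteq> V" "b \<le> length xs" "xs \<noteq> []"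
  shows "set_pmf (cyc_strategy xs b) \<subseteq> A1 V b"
  using assms cw_sub[OF assms(4)] cw_card[OF assms(1,3)] unfolding cyc_set[OF assms(4)] A1_def by auto

lemma cyc_A2:
  assumes "distinct ys" "set ys \<subseteq> E" "b \<le> length ys" "ys \<noteq> []"
  shows "set_pmf (cyc_strategy ys b) \<subseteq> A2 E b"
  using assms cw_sub[OF assms(4)] cw_card[OF assms(1,3)] unfolding cyc_set[OF assms(4)] A2_def by auto

lemma pf_cyc_ge:
  assumes "distinct xs" "set xs \<subseteq> V" "b \<le> length xs" "xs \<noteq> []" "cover_set C (set xs) = E" "e \<in> E"
  shows "real b / real (length xs) \<le> pf (cyc_strategy xs b) e"
proof -
  let ?s = "cyc_strategy xs b"
  have sub: "set_pmf ?s \<subseteq> Pow V" using cyc_A1[OF assms(1-4)] A1_sub by blast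
  have "pf ?s e = measure_pmf.expectation ?s (\<lambda>S. if e \<in> cover_set C S then 1 else 0)"
    unfolding pf_def by (rule E_sum[OF finPV sub, symmetric])
  also have "\<dots> = (\<Sum>k<length xs. if e \<in> cover_set C (cyc_window xs b k) then 1 else 0) / length xs"
    by (rule cyc_E[OF assms(4)])
  finally have pe: "pf ?s e = (\<Sum>k<length xs. if e \<in> cover_set C (cyc_window xs b k) then 1 else 0) / length xs" .
  obtain i where i: "i < length xs" "e \<in> C (xs ! i)"
    using assms(5,6) unfolding cover_set_def by (auto simp: in_set_conv_nth)
  have "real b = (\<Sum>k<length xs. (if xs ! i \<in> cyc_window xs b k then 1 else 0 :: real))"
    using cw_count[OF assms(1,3) i(1)] by simp
  also have "\<dots> \<le> (\<Sum>k<length xs. if e \<in> cover_set C (cyc_window xs b k) then 1 else 0)"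
    using i by (intro sum_mono) (auto simp: cover_set_def)
  finally show ?thesis unfolding pe by (simp add: divide_right_mono)
qed

lemma qf_cyc:
  assumes "distinct ys" "set ys \<subseteq> E" "b \<le> length ys" "ys \<noteq> []"
  shows "qf (cyc_strategy ys b) e = (if e \<in> set ys then real b / real (length ys) else 0)"
proof -
  let ?t = "cyc_strategy ys b"
  have sub: "set_pmf ?t \<subseteq> Pow E" using cyc_A2[OF assms] A2_sub by blast
  have "qf ?t e = measure_pmf.expectation ?t (\<lambda>T. if e \<in> T then 1 else 0)"
    unfolding qf_def by (rule E_sum[OF finPE sub, symmetric])
  also have "\<dots> = (\<Sum>k<length ys. if e \<in> cyc_window ys b k then 1 else 0) / length ys"
    by (rule cyc_E[OF assms(4)])
  finally have qe: "qf ?t e = (\<Sum>k<length ys. if e \<in> cyc_window ys b k then 1 else 0) / length ys" .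
  show ?thesis
  proof (cases "e \<in> set ys")
    case True
    then obtain i where i: "i < length ys" "e = ys ! i" by (auto simp: in_set_conv_nth)
    show ?thesis unfolding qe using cw_count[OF assms(1,3) i(1)] True i by simp
  next
    case False
    hence "\<forall>k. e \<notin> cyc_window ys b k" using cw_sub[OF assms(4)] by blast
    thus ?thesis unfolding qe using False by simp
  qed
qed

end

lemma sum_pmf_mono_supp:
  fixes f g :: "'a \<Rightarrow> real"
  assumes "\<forall>a\<in>set_pmf s. f a \<le> g a"
  shows "(\<Sum>a\<in>A. pmf s a * f a) \<le> (\<Sum>a\<in>A. pmf s a * g a)"
proof (intro sum_mono)
  fix a assume "a \<in> A"
  show "pmf s a * f a \<le> pmf s a * g a"
    using assms by (cases "a \<in> set_pmf s") (auto intro: mult_left_mono simp: set_pmf_iff)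
qed

lemma sum_pmf_eq_supp:
  fixes f :: "'a \<Rightarrow> real"
  assumes "finite A" "set_pmf s \<subseteq> A" "\<forall>a\<in>set_pmf s. f a = c"
  shows "(\<Sum>a\<in>A. pmf s a * f a) = c"
  using sum_pmf_le_supp[OF assms(1,2), of f c] sum_pmf_ge_supp[OF assms(1,2), of c f] assms(3) by auto

context gm begin

lemma det_rate_eq:
  assumes "set_pmf s \<subseteq> Pow V" "set_pmf t \<subseteq> Pow E"
  shows "det_rate C (s,t) = (\<Sum>T\<in>Pow E. pmf t T * (Gf s T / real (card T)))"
proof -
  have "det_rate C (s,t) = (\<Sum>S\<in>Pow V. pmf s S * (\<Sum>T\<in>Pow E. pmf t T * (real (Fdet C S T) / real (card T))))"
    unfolding det_rate_def fst_conv snd_conv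
    by (rule E_pair[OF finPV finPE assms, of "\<lambda>S T. real (Fdet C S T) / real (card T)"])
  also have "\<dots> = (\<Sum>T\<in>Pow E. pmf t T * (Gf s T / real (card T)))"
    unfolding Gf_def sum_distrib_left sum_divide_distrib
    by (subst sum.swap) (simp add: mult_ac)
  finally show ?thesis .
qed

lemma U1_G:
  assumes "set_pmf s \<subseteq> Pow V" "set_pmf t \<subseteq> Pow E"
  shows "U1 C s t = (\<Sum>T\<in>Pow E. pmf t T * Gf s T)"
proof -
  have "U1 C s t = (\<Sum>S\<in>Pow V. pmf s S * (\<Sum>T\<in>Pow E. pmf t T * real (Fdet C S T)))"
    unfolding U1_def by (rule E_pair[OF finPV finPE assms, of "\<lambda>S T. real (Fdet C S T)"])
  also have "\<dots> = (\<Sum>T\<in>Pow E. pmf t T * Gf s T)"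
    unfolding Gf_def sum_distrib_left by (subst sum.swap) (simp add: mult.left_commute)
  finally show ?thesis .
qed

lemma Gf_nonneg: "set_pmf s \<subseteq> Pow V \<Longrightarrow> 0 \<le> Gf s T"
  unfolding Gf_def by (intro sum_nonneg) auto

lemma Gf_bound:
  assumes "set_pmf s \<subseteq> A1 V b1" "is_set_packing V E C Y"
  shows "Gf s Y \<le> real b1"
proof -
  have sub: "set_pmf s \<subseteq> Pow V" using assms A1_sub by blast
  show ?thesis unfolding Gf_def
  proof (rule sum_pmf_le_supp[OF finPV sub], intro ballI)
    fix S assume "S \<in> set_pmf s"
    hence S: "S \<subseteq> V" "card S \<le> b1" using assms(1) unfolding A1_def by auto
    show "real (Fdet C S Y) \<le> real b1" unfolding Fdet_def using packing_card[OF assms(2) S(1)] S(2) by simp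
  qed
qed

lemma sum_pf_Y:
  assumes "set_pmf s \<subseteq> Pow V" "Y \<subseteq> E"
  shows "(\<Sum>e\<in>Y. pf s e) = Gf s Y"
proof -
  have "Gf s Y = (\<Sum>S\<in>Pow V. \<Sum>e\<in>Y. pmf s S * (if e \<in> cover_set C S then 1 else 0))"
    unfolding Gf_def using assms(2) by (simp add: Fdet_T sum_distrib_left)
  also have "\<dots> = (\<Sum>e\<in>Y. pf s e)" unfolding pf_def by (rule sum.swap)
  finally show ?thesis by simp
qed

lemma sum_qf_cyc:
  assumes "distinct ys" "set ys \<subseteq> E" "b \<le> length ys" "ys \<noteq> []"
  shows "(\<Sum>e\<in>E. qf (cyc_strategy ys b) e) = real b"
proof -
  have "(\<Sum>e\<in>E. qf (cyc_strategy ys b) e) = (\<Sum>e\<in>E. if e \<in> set ys then real b / real (length ys) else 0)"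
    using qf_cyc[OF assms] by simp
  also have "\<dots> = real (card (E \<inter> set ys)) * (real b / real (length ys))"
    using finE by (simp add: sum.If_cases)
  also have "E \<inter> set ys = set ys" using assms by auto
  also have "real (card (set ys)) = real (length ys)" using assms(1) by (simp add: distinct_card)
  finally show ?thesis using assms(4) by simp
qed

lemma sum_pq_cyc:
  assumes "distinct ys" "set ys \<subseteq> E" "b \<le> length ys" "ys \<noteq> []"
  shows "(\<Sum>e\<in>E. f e * qf (cyc_strategy ys b) e) = real b / real (length ys) * (\<Sum>e\<in>set ys. f e)"
proof -
  have "(\<Sum>e\<in>E. f e * qf (cyc_strategy ys b) e) = (\<Sum>e\<in>E. if e \<in> set ys then real b / real (length ys) * f e else 0)"
    using qf_cyc[OF assms] by (intro sum.cong) auto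
  also have "\<dots> = (\<Sum>e\<in>E \<inter> set ys. real b / real (length ys) * f e)"
    by (rule sum.inter_restrict[OF finE, symmetric])
  also have "E \<inter> set ys = set ys" using assms by auto
  finally show ?thesis by (simp add: sum_distrib_left)
qed

lemma R2:
  assumes n: "nash V E C b1 b2 (s,t)"
    and ys: "distinct ys" "is_set_packing V E C (set ys)" "b2 \<le> length ys" "b1 < length ys" "0 < b2"
  shows "{} \<notin> set_pmf t \<and> det_rate C (s,t) \<le> real b1 / real (length ys)"
proof -
  let ?m = "real (length ys)"
  have ne: "ys \<noteq> []" using ys by auto
  have m0: "0 < ?m" using ne by simp
  have en: "eps_nash V E C b1 b2 0 (s,t)" using n unfolding nash_def .
  have vs: "set_pmf s \<subseteq> A1 V b1" "set_pmf t \<subseteq> A2 E b2" using en unfolding eps_nash_def valid_profile_def by auto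
  have v: "set_pmf s \<subseteq> Pow V" "set_pmf t \<subseteq> Pow E" using vs A1_sub A2_sub by blast+
  have Y: "set ys \<subseteq> E" using ys(2) unfolding is_set_packing_def by auto
  let ?tc = "cyc_strategy ys b2"
  have tcA: "set_pmf ?tc \<subseteq> A2 E b2" by (rule cyc_A2[OF ys(1) Y ys(3) ne])
  have tcP: "set_pmf ?tc \<subseteq> Pow E" using tcA A2_sub by blast
  have "U2 C s ?tc \<le> U2 C s t" using en tcA unfolding eps_nash_def by auto
  moreover have "U2 C s ?tc = real b2 - real b2 / ?m * Gf s (set ys)"
    using U2_bilin[OF v(1) tcP] U1_bilin[OF v(1) tcP] sum_qf_cyc[OF ys(1) Y ys(3) ne]
      sum_pq_cyc[OF ys(1) Y ys(3) ne, of "pf s"] sum_pf_Y[OF v(1) Y] by simp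
  moreover have "real b2 / ?m * Gf s (set ys) \<le> real b2 / ?m * real b1"
    using Gf_bound[OF vs(1) ys(2)] m0 by (intro mult_left_mono) auto
  ultimately have U2ge: "real b2 - real b2 / ?m * real b1 \<le> U2 C s t" by linarith
  have "real b2 / ?m * real b1 < real b2"
  proof -
    have "real b2 / ?m * real b1 = real b2 * (real b1 / ?m)" by simp
    also have "\<dots> < real b2 * 1" using ys(4,5) m0 by (intro mult_strict_left_mono) (auto simp: divide_less_eq)
    finally show ?thesis by simp
  qed
  hence U2pos: "0 < U2 C s t" using U2ge by linarith
  have supp: "Zf s T = U2 C s t" if "T \<in> set_pmf t" for T using nash_suppZ[OF n that] .
  have Zempty: "Zf s {} = 0" unfolding Zf_def Gf_def Fdet_def by simp
  have nemp: "{} \<notin> set_pmf t" using supp[of "{}"] Zempty U2pos by auto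
  have "det_rate C (s,t) = (\<Sum>T\<in>Pow E. pmf t T * (Gf s T / real (card T)))" by (rule det_rate_eq[OF v])
  also have "\<dots> \<le> 1 - U2 C s t / real b2"
  proof (rule sum_pmf_le_supp[OF finPE v(2)], intro ballI)
    fix T assume T: "T \<in> set_pmf t"
    have cT: "card T \<le> b2" "T \<subseteq> E" using T vs(2) unfolding A2_def by auto
    have fT: "finite T" using cT finE finite_subset by blast
    have c0: "0 < card T" using T nemp fT by (cases "T = {}") (auto simp: card_gt_0_iff)
    have "Gf s T / real (card T) = 1 - U2 C s t / real (card T)"
      using supp[OF T] c0 unfolding Zf_def by (simp add: field_simps)
    also have "\<dots> \<le> 1 - U2 C s t / real b2"
      using U2pos c0 cT by (simp add: frac_le)
    finally show "Gf s T / real (card T) \<le> 1 - U2 C s t / real b2" .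
  qed
  also have "\<dots> \<le> real b1 / ?m"
  proof -
    have "(real b2 - real b2 / ?m * real b1) / real b2 \<le> U2 C s t / real b2"
      using U2ge ys(5) by (simp add: divide_right_mono)
    moreover have "(real b2 - real b2 / ?m * real b1) / real b2 = 1 - real b1 / ?m"
      using ys(5) m0 by (simp add: field_simps)
    ultimately show ?thesis by linarith
  qed
  finally show ?thesis using nemp by simp
qed

end

context gm begin

lemma Zf_insert:
  assumes "T \<subseteq> E" "e \<notin> T" "set_pmf s \<subseteq> Pow V" "e \<in> E"
  shows "Zf s (insert e T) = Zf s T + (1 - pf s e)"
proof -
  have fT: "finite T" using assms finE finite_subset by blast
  show ?thesis using Zf_eq[OF assms(1,3)] Zf_eq[of "insert e T" s] assms fT by simp
qed

lemma Zf_swap: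
  assumes "T \<subseteq> E" "e \<in> T" "a \<notin> T" "a \<in> E" "set_pmf s \<subseteq> Pow V"
  shows "Zf s (insert a (T - {e})) = Zf s T - (1 - pf s e) + (1 - pf s a)"
proof -
  have fT: "finite T" using assms finE finite_subset by blast
  have "Zf s (insert a (T - {e})) = Zf s (T - {e}) + (1 - pf s a)"
    using assms by (intro Zf_insert) auto
  moreover have "Zf s T = Zf s (T - {e}) + (1 - pf s e)"
    using Zf_insert[of "T - {e}" e s] assms insert_Diff[OF assms(2)] by auto
  ultimately show ?thesis by simp
qed

lemma Wf_insert:
  assumes "S \<subseteq> V" "j \<in> V" "a \<in> C j" "a \<notin> cover_set C S" "set_pmf t \<subseteq> Pow E"
  shows "Wf t S + qf t a \<le> Wf t (insert j S)"
proof -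
  have S': "insert j S \<subseteq> V" using assms by auto
  have sub: "insert a (cover_set C S) \<subseteq> cover_set C (insert j S)"
    using assms unfolding cover_set_def by auto
  have "Wf t S + qf t a = (\<Sum>e\<in>insert a (cover_set C S). qf t e)"
    using Wf_eq[OF assms(1,5)] assms fin_cover[OF assms(1)] by simp
  also have "\<dots> \<le> (\<Sum>e\<in>cover_set C (insert j S). qf t e)"
    using sub fin_cover[OF S'] qf_bounds[OF assms(5)] by (intro sum_mono2) auto
  also have "\<dots> = Wf t (insert j S)" using Wf_eq[OF S' assms(5)] by simp
  finally show ?thesis .
qed

lemma Wf_loss_sum:
  assumes "S0 \<subseteq> V" "set_pmf t \<subseteq> Pow E"
  shows "(\<Sum>i\<in>S0. Wf t S0 - Wf t (S0 - {i})) \<le> Wf t S0"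
proof -
  have fS0: "finite S0" using assms finV finite_subset by blast
  define U where "U i = cover_set C S0 - cover_set C (S0 - {i})" for i
  have sub: "cover_set C (S0 - {i}) \<subseteq> cover_set C S0" for i unfolding cover_set_def by auto
  have fc: "finite (cover_set C S0)" by (rule fin_cover[OF assms(1)])
  have loss: "Wf t S0 - Wf t (S0 - {i}) = (\<Sum>e\<in>U i. qf t e)" for i
  proof -
    have "Wf t S0 - Wf t (S0 - {i}) = (\<Sum>e\<in>cover_set C S0. qf t e) - (\<Sum>e\<in>cover_set C (S0 - {i}). qf t e)"
      using Wf_eq[OF assms(1,2)] Wf_eq[of "S0 - {i}" t] assms by auto
    also have "\<dots> = (\<Sum>e\<in>U i. qf t e)" unfolding U_def by (rule sum_diff[OF fc sub, symmetric])
    finally show ?thesis .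
  qed
  have disj: "U i \<inter> U i' = {}" if "i \<in> S0" "i' \<in> S0" "i \<noteq> i'" for i i'
    using that unfolding U_def cover_set_def by auto
  have fU: "finite (U i)" for i unfolding U_def using fc by auto
  have "(\<Sum>i\<in>S0. Wf t S0 - Wf t (S0 - {i})) = (\<Sum>i\<in>S0. \<Sum>e\<in>U i. qf t e)" using loss by simp
  also have "\<dots> = (\<Sum>e\<in>(\<Union>i\<in>S0. U i). qf t e)"
    using sum.UNION_disjoint[OF fS0, of U "qf t"] fU disj by simp
  also have "\<dots> \<le> (\<Sum>e\<in>cover_set C S0. qf t e)"
    using fc qf_bounds[OF assms(2)] unfolding U_def by (intro sum_mono2) auto
  also have "\<dots> = Wf t S0" using Wf_eq[OF assms] by simp
  finally show ?thesis .
qed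

lemma R1:
  assumes n: "nash V E C b1 b2 (s,t)"
    and xs: "distinct xs" "set xs \<subseteq> V" "cover_set C (set xs) = E" "b1 \<le> length xs" "b2 \<le> length xs"
    and b2: "0 < b2" and nemp: "{} \<notin> set_pmf t"
  shows "real b1 / real (length xs) \<le> det_rate C (s,t)"
proof -
  let ?n = "real (length xs)"
  have ne: "xs \<noteq> []" using xs b2 by auto
  have n0: "0 < ?n" using ne by simp
  have en: "eps_nash V E C b1 b2 0 (s,t)" using n unfolding nash_def .
  have vs: "set_pmf s \<subseteq> A1 V b1" "set_pmf t \<subseteq> A2 E b2" using en unfolding eps_nash_def valid_profile_def by auto
  have v: "set_pmf s \<subseteq> Pow V" "set_pmf t \<subseteq> Pow E" using vs A1_sub A2_sub by blast+
  have tinfo: "card T \<le> b2 \<and> T \<subseteq> E \<and> finite T \<and> 0 < card T" if "T \<in> set_pmf t" for T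
  proof -
    have "card T \<le> b2" "T \<subseteq> E" using that vs(2) unfolding A2_def by auto
    moreover have "finite T" using calculation finE finite_subset by blast
    moreover have "T \<noteq> {}" using that nemp by auto
    ultimately show ?thesis by (simp add: card_gt_0_iff)
  qed
  have rate_ge: "U1 C s t / real b2 \<le> det_rate C (s,t)"
  proof -
    have "U1 C s t / real b2 = (\<Sum>T\<in>Pow E. pmf t T * (Gf s T / real b2))"
      unfolding U1_G[OF v] sum_divide_distrib by simp
    also have "\<dots> \<le> (\<Sum>T\<in>Pow E. pmf t T * (Gf s T / real (card T)))"
    proof (rule sum_pmf_mono_supp, intro ballI)
      fix T assume T: "T \<in> set_pmf t"
      show "Gf s T / real b2 \<le> Gf s T / real (card T)"
        using tinfo[OF T] Gf_nonneg[OF v(1)] by (intro divide_left_mono) auto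
    qed
    also have "\<dots> = det_rate C (s,t)" by (rule det_rate_eq[OF v, symmetric])
    finally show ?thesis .
  qed
  show ?thesis
  proof (cases "\<forall>T\<in>set_pmf t. card T = b2")
    case True
    let ?sc = "cyc_strategy xs b1"
    have scA: "set_pmf ?sc \<subseteq> A1 V b1" by (rule cyc_A1[OF xs(1,2,4) ne])
    have scP: "set_pmf ?sc \<subseteq> Pow V" using scA A1_sub by blast
    have "U1 C ?sc t \<le> U1 C s t" using en scA unfolding eps_nash_def by auto
    moreover have "real b1 / ?n * real b2 \<le> U1 C ?sc t"
    proof -
      have Ec: "(\<Sum>e\<in>E. qf t e) = real b2"
      proof -
        have "(\<Sum>e\<in>E. qf t e) = (\<Sum>T\<in>Pow E. pmf t T * real (card T))" by (rule Ecard_eq[OF v(2), symmetric])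
        also have "\<dots> = real b2" using True by (intro sum_pmf_eq_supp[OF finPE v(2)]) auto
        finally show ?thesis .
      qed
      have "real b1 / ?n * real b2 = (\<Sum>e\<in>E. real b1 / ?n * qf t e)" by (subst sum_distrib_left[symmetric]) (simp only: Ec)
      also have "\<dots> \<le> (\<Sum>e\<in>E. pf ?sc e * qf t e)"
        using pf_cyc_ge[OF xs(1,2,4) ne xs(3)] qf_bounds[OF v(2)] by (intro sum_mono mult_right_mono) auto
      also have "\<dots> = U1 C ?sc t" by (rule U1_bilin[OF scP v(2), symmetric])
      finally show ?thesis .
    qed
    ultimately have "real b1 / ?n * real b2 \<le> U1 C s t" by linarith
    hence "real b1 / ?n \<le> U1 C s t / real b2" using b2 by (simp add: field_simps)
    thus ?thesis using rate_ge by linarith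
  next
    case False
    then obtain T0 where T0: "T0 \<in> set_pmf t" "card T0 \<noteq> b2" by blast
    have T0lt: "card T0 < b2" and T0E: "T0 \<subseteq> E" and fT0: "finite T0" using tinfo[OF T0(1)] T0(2) by auto
    show ?thesis
    proof (cases "\<forall>e\<in>E. \<forall>S\<in>set_pmf s. e \<in> cover_set C S")
      case True
      have G: "Gf s T = real (card T)" if "T \<in> set_pmf t" for T
        unfolding Gf_def
      proof (rule sum_pmf_eq_supp[OF finPV v(1)], intro ballI)
        fix S assume "S \<in> set_pmf s"
        hence "T \<subseteq> cover_set C S" using True tinfo[OF that] by auto
        thus "real (Fdet C S T) = real (card T)" unfolding Fdet_def by (simp add: Int_absorb1)
      qed
      have "det_rate C (s,t) = (\<Sum>T\<in>Pow E. pmf t T * (Gf s T / real (card T)))" by (rule det_rate_eq[OF v])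
      also have "\<dots> = 1"
      proof (intro sum_pmf_eq_supp[OF finPE v(2)] ballI)
        fix T assume T: "T \<in> set_pmf t"
        have "0 < card T" using tinfo[OF T] by simp
        thus "Gf s T / real (card T) = 1" using G[OF T] by simp
      qed
      finally show ?thesis using xs(4) n0 by simp
    next
      case False
      then obtain a S0 where a: "a \<in> E" and S0: "S0 \<in> set_pmf s" and aS0: "a \<notin> cover_set C S0" by blast
      have S0A: "S0 \<in> A1 V b1" using S0 vs(1) by blast
      have S0V: "S0 \<subseteq> V" and cS0: "card S0 \<le> b1" using S0A unfolding A1_def by auto
      define u where "u e = 1 - pf s e" for e
      have u0: "0 \<le> u e" for e unfolding u_def using pf_bounds[OF v(1)] by auto
      have ua: "0 < u a"
      proof -
        have "pf s a \<le> (\<Sum>S\<in>Pow V. pmf s S * (if S = S0 then 0 else 1))"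
          unfolding pf_def using aS0 by (intro sum_mono mult_left_mono) auto
        also have "\<dots> = (\<Sum>S\<in>Pow V. pmf s S) - pmf s S0"
        proof -
          have "(\<Sum>S\<in>Pow V. pmf s S * (if S = S0 then 0 else 1)) = (\<Sum>S\<in>Pow V. pmf s S - (if S = S0 then pmf s S else 0))"
            by (intro sum.cong) auto
          also have "\<dots> = (\<Sum>S\<in>Pow V. pmf s S) - pmf s S0"
            using S0V finPV by (simp add: sum_subtractf)
          finally show ?thesis .
        qed
        also have "\<dots> = 1 - pmf s S0" using sum_pmf_eq_1[OF finPV v(1)] by simp
        finally have "pf s a \<le> 1 - pmf s S0" .
        moreover have "0 < pmf s S0" using S0 by (simp add: pmf_positive)
        ultimately show ?thesis unfolding u_def by simp
      qed
      have Zmax: "Zf s T' \<le> U2 C s t" if "T' \<in> A2 E b2" for T' using nashZ[OF en that] by simp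
      have Zsupp: "Zf s T = U2 C s t" if "T \<in> set_pmf t" for T by (rule nash_suppZ[OF n that])
      have uzero: "u e = 0" if "e \<in> E" "e \<notin> T0" for e
      proof -
        have "insert e T0 \<in> A2 E b2"
          using that T0E T0lt fT0 unfolding A2_def by auto
        hence "Zf s (insert e T0) \<le> U2 C s t" by (rule Zmax)
        moreover have "Zf s (insert e T0) = Zf s T0 + u e"
          unfolding u_def by (rule Zf_insert[OF T0E that(2) v(1) that(1)])
        ultimately have "u e \<le> 0" using Zsupp[OF T0(1)] by simp
        thus ?thesis using u0[of e] by simp
      qed
      have aT0: "a \<in> T0" using uzero[OF a] ua by (cases "a \<in> T0") auto
      have aT: "a \<in> T" if T: "T \<in> set_pmf t" for T
      proof (rule ccontr)
        assume naT: "a \<notin> T"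
        have TE: "T \<subseteq> E" and cT: "card T \<le> b2" and fT: "finite T" using tinfo[OF T] by auto
        show False
        proof (cases "card T < b2")
          case True
          have "insert a T \<in> A2 E b2" using a TE True fT naT unfolding A2_def by auto
          hence "Zf s (insert a T) \<le> U2 C s t" by (rule Zmax)
          moreover have "Zf s (insert a T) = Zf s T + u a"
            unfolding u_def by (rule Zf_insert[OF TE naT v(1) a])
          ultimately show False using Zsupp[OF T] ua by simp
        next
          case False
          hence cTb: "card T = b2" using cT by simp
          have "\<not> T \<subseteq> T0"
          proof
            assume "T \<subseteq> T0"
            hence "card T \<le> card T0" using fT0 by (simp add: card_mono)
            thus False using cTb T0lt by simp
          qed
          then obtain e where e: "e \<in> T" "e \<notin> T0" by blast
          have eE: "e \<in> E" using e TE by auto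
          have "insert a (T - {e}) \<in> A2 E b2"
          proof -
            have "card (insert a (T - {e})) = card (T - {e}) + 1" using fT naT by simp
            also have "\<dots> = card T"
            proof -
              have "0 < card T" using e fT card_gt_0_iff by blast
              thus ?thesis using e fT by (simp add: card_Diff_singleton)
            qed
            finally show ?thesis using cT TE a unfolding A2_def by auto
          qed
          hence "Zf s (insert a (T - {e})) \<le> U2 C s t" by (rule Zmax)
          moreover have "Zf s (insert a (T - {e})) = Zf s T - u e + u a"
            unfolding u_def by (rule Zf_swap[OF TE e(1) naT a v(1)])
          ultimately show False using Zsupp[OF T] ua uzero[OF eE e(2)] by simp
        qed
      qed
      have qa: "qf t a = 1"
        unfolding qf_def using aT by (intro sum_pmf_eq_supp[OF finPE v(2)]) auto
      obtain j where j: "j \<in> V" "a \<in> C j" using Ecov a by blast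
      have jS0: "j \<notin> S0" using j aS0 unfolding cover_set_def by auto
      have U1eq: "Wf t S0 = U1 C s t" by (rule nash_suppW[OF n S0])
      have Wmax: "Wf t S' \<le> U1 C s t" if "S' \<in> A1 V b1" for S' using nashW[OF en that] by simp
      have fS0: "finite S0" using S0V finV finite_subset by blast
      have cardS0: "b1 \<le> card S0"
      proof (rule ccontr)
        assume "\<not> b1 \<le> card S0"
        hence "insert j S0 \<in> A1 V b1" using j S0V fS0 jS0 unfolding A1_def by auto
        hence "Wf t (insert j S0) \<le> U1 C s t" by (rule Wmax)
        moreover have "Wf t S0 + qf t a \<le> Wf t (insert j S0)" by (rule Wf_insert[OF S0V j aS0 v(2)])
        ultimately show False using U1eq qa by simp
      qed
      have loss1: "1 \<le> Wf t S0 - Wf t (S0 - {i})" if i: "i \<in> S0" for i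
      proof -
        have sub: "S0 - {i} \<subseteq> V" using S0V by auto
        have naS: "a \<notin> cover_set C (S0 - {i})" using aS0 unfolding cover_set_def by auto
        have "insert j (S0 - {i}) \<in> A1 V b1"
        proof -
          have "card (insert j (S0 - {i})) = card (S0 - {i}) + 1" using fS0 jS0 by simp
          also have "\<dots> = card S0"
          proof -
            have "0 < card S0" using i fS0 card_gt_0_iff by blast
            thus ?thesis using i fS0 by (simp add: card_Diff_singleton)
          qed
          finally show ?thesis using cS0 sub j unfolding A1_def by auto
        qed
        hence "Wf t (insert j (S0 - {i})) \<le> U1 C s t" by (rule Wmax)
        moreover have "Wf t (S0 - {i}) + qf t a \<le> Wf t (insert j (S0 - {i}))" by (rule Wf_insert[OF sub j naS v(2)])
        ultimately show ?thesis using U1eq qa by simp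
      qed
      have "real b1 \<le> real (card S0)" using cardS0 by simp
      also have "\<dots> = (\<Sum>i\<in>S0. 1)" by simp
      also have "\<dots> \<le> (\<Sum>i\<in>S0. Wf t S0 - Wf t (S0 - {i}))" using loss1 by (intro sum_mono) auto
      also have "\<dots> \<le> Wf t S0" by (rule Wf_loss_sum[OF S0V v(2)])
      finally have "real b1 \<le> U1 C s t" using U1eq by simp
      hence "real b1 / real b2 \<le> U1 C s t / real b2" using b2 by (simp add: divide_right_mono)
      moreover have "real b1 / ?n \<le> real b1 / real b2" using b2 xs(5) by (simp add: frac_le)
      ultimately show ?thesis using rate_ge by linarith
    qed
  qed
qed

end

definition mkpmf :: "('a \<Rightarrow> real) \<Rightarrow> 'a set \<Rightarrow> 'a pmf" where
  "mkpmf x A = embed_pmf (\<lambda>a. if a \<in> A then x a else 0)"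

lemma mkpmf:
  assumes "finite A" "x \<in> dsx A"
  shows "pmf (mkpmf x A) a = (if a \<in> A then x a else 0)" "set_pmf (mkpmf x A) \<subseteq> A"
proof -
  define f where "f a = (if a \<in> A then x a else 0)" for a
  have nn: "0 \<le> f a" for a unfolding f_def using dsx_nonneg[OF assms(2)] by auto
  have "(\<integral>\<^sup>+a. ennreal (f a) \<partial>count_space UNIV) = (\<Sum>a\<in>A. ennreal (f a))"
    using assms(1) unfolding f_def by (intro nn_integral_count_space') auto
  also have "\<dots> = ennreal (\<Sum>a\<in>A. f a)" using nn by simp
  also have "(\<Sum>a\<in>A. f a) = 1" unfolding f_def using dsx_sum[OF assms(2)] by simp
  finally have pr: "(\<integral>\<^sup>+a. ennreal (f a) \<partial>count_space UNIV) = 1" by simp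
  show "pmf (mkpmf x A) a = (if a \<in> A then x a else 0)"
    unfolding mkpmf_def f_def[symmetric] using pmf_embed_pmf[of f, OF nn pr] unfolding f_def by simp
  show "set_pmf (mkpmf x A) \<subseteq> A"
    unfolding mkpmf_def f_def[symmetric] using set_embed_pmf[of f, OF nn pr] unfolding f_def by auto
qed

lemma sum_pmf_restrict:
  fixes f :: "'a \<Rightarrow> real"
  assumes "finite B" "set_pmf t \<subseteq> A" "A \<subseteq> B"
  shows "(\<Sum>a\<in>B. pmf t a * f a) = (\<Sum>a\<in>A. pmf t a * f a)"
  using assms by (intro sum.mono_neutral_right) (auto simp: set_pmf_iff)

context gm begin

lemma nash_exists: "\<exists>\<sigma>. nash V E C b1 b2 \<sigma>"
proof -
  let ?X = "A2 E b2" and ?Y = "A1 V b1"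
  define g where "g T S = real (card T) - real (Fdet C S T)" for T S
  have neX: "?X \<noteq> {}" unfolding A2_def by auto
  have neY: "?Y \<noteq> {}" unfolding A1_def by auto
  obtain x y v where x: "x \<in> dsx ?X" and y: "y \<in> dsx ?Y"
    and h1: "\<forall>S\<in>?Y. v \<le> (\<Sum>T\<in>?X. x T * g T S)" and h2: "\<forall>T\<in>?X. (\<Sum>S\<in>?Y. y S * g T S) \<le> v"
    using minimax[OF fin_A2 neX fin_A1 neY, of g] by blast
  define s where "s = mkpmf y ?Y"
  define t where "t = mkpmf x ?X"
  have ps: "pmf s S = (if S \<in> ?Y then y S else 0)" for S unfolding s_def by (rule mkpmf(1)[OF fin_A1 y])
  have pt: "pmf t T = (if T \<in> ?X then x T else 0)" for T unfolding t_def by (rule mkpmf(1)[OF fin_A2 x])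
  have ss: "set_pmf s \<subseteq> ?Y" unfolding s_def by (rule mkpmf(2)[OF fin_A1 y])
  have st: "set_pmf t \<subseteq> ?X" unfolding t_def by (rule mkpmf(2)[OF fin_A2 x])
  have vp: "valid_profile V E b1 b2 (s,t)" unfolding valid_profile_def using ss st by simp
  have vP: "set_pmf s \<subseteq> Pow V" "set_pmf t \<subseteq> Pow E" using ss st A1_sub A2_sub by blast+
  define K where "K = (\<Sum>T\<in>?X. x T * real (card T))"
  have sx: "(\<Sum>T\<in>?X. x T) = 1" by (rule dsx_sum[OF x])
  have sy: "(\<Sum>S\<in>?Y. y S) = 1" by (rule dsx_sum[OF y])
  have WX: "Wf t S = K - (\<Sum>T\<in>?X. x T * g T S)" for S
  proof -
    have "Wf t S = (\<Sum>T\<in>?X. pmf t T * real (Fdet C S T))"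
      unfolding Wf_def by (rule sum_pmf_restrict[OF finPE st A2_sub])
    also have "\<dots> = (\<Sum>T\<in>?X. x T * real (Fdet C S T))" using pt by simp
    also have "\<dots> = K - (\<Sum>T\<in>?X. x T * g T S)"
      unfolding K_def g_def by (simp add: right_diff_distrib sum_subtractf)
    finally show ?thesis .
  qed
  have ZY: "Zf s T = (\<Sum>S\<in>?Y. y S * g T S)" for T
  proof -
    have "Gf s T = (\<Sum>S\<in>?Y. pmf s S * real (Fdet C S T))"
      unfolding Gf_def by (rule sum_pmf_restrict[OF finPV ss A1_sub])
    also have "\<dots> = (\<Sum>S\<in>?Y. y S * real (Fdet C S T))" using ps by simp
    finally have "Gf s T = (\<Sum>S\<in>?Y. y S * real (Fdet C S T))" .
    moreover have "(\<Sum>S\<in>?Y. y S * g T S) = real (card T) * (\<Sum>S\<in>?Y. y S) - (\<Sum>S\<in>?Y. y S * real (Fdet C S T))"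
      unfolding g_def by (simp add: right_diff_distrib sum_subtractf sum_distrib_left mult.commute)
    ultimately show ?thesis unfolding Zf_def using sy by simp
  qed
  have U1v: "K - v \<le> U1 C s t"
  proof -
    have "U1 C s t = (\<Sum>S\<in>?Y. pmf s S * Wf t S)" by (rule U1_gen[OF ss A1_sub vP(2)])
    also have "\<dots> = (\<Sum>S\<in>?Y. y S * (K - (\<Sum>T\<in>?X. x T * g T S)))" using ps WX by simp
    also have "\<dots> = K - (\<Sum>S\<in>?Y. y S * (\<Sum>T\<in>?X. x T * g T S))"
      using sy by (simp add: right_diff_distrib sum_subtractf sum_distrib_left[symmetric] mult.commute)
    finally have e1: "U1 C s t = K - (\<Sum>S\<in>?Y. y S * (\<Sum>T\<in>?X. x T * g T S))" .
    have "(\<Sum>S\<in>?Y. y S * (\<Sum>T\<in>?X. x T * g T S)) = (\<Sum>T\<in>?X. x T * (\<Sum>S\<in>?Y. y S * g T S))"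
      by (rule bilinear_swap)
    also have "\<dots> \<le> v" by (rule dsx_avg_le[OF x fin_A2 h2])
    finally show ?thesis using e1 by simp
  qed
  have U2v: "v \<le> U2 C s t"
  proof -
    have "U2 C s t = (\<Sum>T\<in>?X. pmf t T * Zf s T)" by (rule U2_gen[OF vP(1) st A2_sub])
    also have "\<dots> = (\<Sum>T\<in>?X. x T * (\<Sum>S\<in>?Y. y S * g T S))" using pt ZY by simp
    also have "\<dots> = (\<Sum>S\<in>?Y. y S * (\<Sum>T\<in>?X. x T * g T S))" by (rule bilinear_swap[symmetric])
    finally have "U2 C s t = (\<Sum>S\<in>?Y. y S * (\<Sum>T\<in>?X. x T * g T S))" .
    moreover have "v \<le> (\<Sum>S\<in>?Y. y S * (\<Sum>T\<in>?X. x T * g T S))" by (rule dsx_avg_ge[OF y fin_A1 h1])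
    ultimately show ?thesis by simp
  qed
  have "eps_nash V E C b1 b2 0 (s,t)"
  proof (rule nashI[OF vp])
    show "\<forall>S\<in>?Y. Wf t S \<le> U1 C s t + 0" using WX h1 U1v by fastforce
    show "\<forall>T\<in>?X. Zf s T \<le> U2 C s t + 0" using ZY h2 U2v by fastforce
  qed
  thus ?thesis unfolding nash_def by blast
qed

lemma cyc_eps:
  assumes xs: "distinct xs" "set xs \<subseteq> V" "cover_set C (set xs) = E" "b1 \<le> length xs" "0 < b1"
    and ys: "distinct ys" "is_set_packing V E C (set ys)" "b2 \<le> length ys" "0 < b2"
  shows "eps_nash V E C b1 b2
           (real b1 * real b2 * (1 / max (real b1) (real (length ys)) - 1 / real (length xs)))
           (cyc_strategy xs b1, cyc_strategy ys b2)"
proof -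
  let ?n = "real (length xs)" and ?m = "real (length ys)"
  let ?sc = "cyc_strategy xs b1" and ?tc = "cyc_strategy ys b2"
  let ?M = "max (real b1) ?m"
  have nex: "xs \<noteq> []" and ney: "ys \<noteq> []" using xs ys by auto
  have n0: "0 < ?n" and m0: "0 < ?m" using nex ney by auto
  have Y: "set ys \<subseteq> E" using ys(2) unfolding is_set_packing_def by auto
  have scA: "set_pmf ?sc \<subseteq> A1 V b1" by (rule cyc_A1[OF xs(1,2,4) nex])
  have tcA: "set_pmf ?tc \<subseteq> A2 E b2" by (rule cyc_A2[OF ys(1) Y ys(3) ney])
  have scP: "set_pmf ?sc \<subseteq> Pow V" using scA A1_sub by blast
  have tcP: "set_pmf ?tc \<subseteq> Pow E" using tcA A2_sub by blast
  have vp: "valid_profile V E b1 b2 (?sc, ?tc)" unfolding valid_profile_def using scA tcA by simp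
  define bnd where "bnd = real b1 * real b2 / ?M"
  have Wb: "Wf ?tc S \<le> bnd" if S: "S \<in> A1 V b1" for S
  proof -
    have SV: "S \<subseteq> V" and cS: "card S \<le> b1" using S unfolding A1_def by auto
    have "Wf ?tc S = (\<Sum>e\<in>cover_set C S. if e \<in> set ys then real b2 / ?m else 0)"
      using Wf_eq[OF SV tcP] qf_cyc[OF ys(1) Y ys(3) ney] by simp
    also have "\<dots> = real (card (cover_set C S \<inter> set ys)) * (real b2 / ?m)"
      using fin_cover[OF SV] by (simp add: sum.If_cases)
    finally have W: "Wf ?tc S = real (card (cover_set C S \<inter> set ys)) * (real b2 / ?m)" .
    have c1: "real (card (cover_set C S \<inter> set ys)) \<le> real b1"
      using packing_card[OF ys(2) SV] cS by simp
    have c2: "real (card (cover_set C S \<inter> set ys)) \<le> ?m"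
    proof -
      have "card (cover_set C S \<inter> set ys) \<le> card (set ys)" by (intro card_mono) auto
      thus ?thesis using distinct_card[OF ys(1)] by simp
    qed
    show ?thesis
    proof (cases "real b1 \<le> ?m")
      case True
      hence "?M = ?m" by simp
      moreover have "real (card (cover_set C S \<inter> set ys)) * (real b2 / ?m) \<le> real b1 * (real b2 / ?m)"
        using c1 m0 by (intro mult_right_mono) auto
      ultimately show ?thesis unfolding W bnd_def by simp
    next
      case False
      hence "?M = real b1" by simp
      moreover have "real (card (cover_set C S \<inter> set ys)) * (real b2 / ?m) \<le> ?m * (real b2 / ?m)"
        using c2 m0 by (intro mult_right_mono) auto
      ultimately show ?thesis unfolding W bnd_def using m0 xs(5) by simp
    qed
  qed
  have U1le: "U1 C ?sc ?tc \<le> bnd"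
  proof -
    have "U1 C ?sc ?tc = (\<Sum>S\<in>A1 V b1. pmf ?sc S * Wf ?tc S)" by (rule U1_gen[OF scA A1_sub tcP])
    also have "\<dots> \<le> bnd" using Wb by (intro sum_pmf_le[OF fin_A1 scA]) auto
    finally show ?thesis .
  qed
  have sq: "(\<Sum>e\<in>E. qf ?tc e) = real b2" by (rule sum_qf_cyc[OF ys(1) Y ys(3) ney])
  have U1ge: "real b1 / ?n * real b2 \<le> U1 C ?sc ?tc"
  proof -
    have "real b1 / ?n * real b2 = (\<Sum>e\<in>E. real b1 / ?n * qf ?tc e)"
      by (subst sum_distrib_left[symmetric]) (simp only: sq)
    also have "\<dots> \<le> (\<Sum>e\<in>E. pf ?sc e * qf ?tc e)"
      using pf_cyc_ge[OF xs(1,2,4) nex xs(3)] qf_bounds[OF tcP] by (intro sum_mono mult_right_mono) auto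
    also have "\<dots> = U1 C ?sc ?tc" by (rule U1_bilin[OF scP tcP, symmetric])
    finally show ?thesis .
  qed
  have epsq: "real b1 * real b2 * (1 / ?M - 1 / ?n) = bnd - real b1 / ?n * real b2"
    unfolding bnd_def by (simp add: algebra_simps)
  have U2eq: "U2 C ?sc ?tc = real b2 - U1 C ?sc ?tc"
    using U2_bilin[OF scP tcP] sq by simp
  have b1n: "real b1 / ?n \<le> 1" using xs(4) n0 by simp
  show ?thesis unfolding epsq
  proof (rule nashI[OF vp])
    show "\<forall>S\<in>A1 V b1. Wf ?tc S \<le> U1 C ?sc ?tc + (bnd - real b1 / ?n * real b2)"
      using Wb U1ge by fastforce
    show "\<forall>T\<in>A2 E b2. Zf ?sc T \<le> U2 C ?sc ?tc + (bnd - real b1 / ?n * real b2)"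
    proof
      fix T assume T: "T \<in> A2 E b2"
      have TE: "T \<subseteq> E" and cT: "card T \<le> b2" using T unfolding A2_def by auto
      have "Zf ?sc T = (\<Sum>e\<in>T. 1 - pf ?sc e)" by (rule Zf_eq[OF TE scP])
      also have "\<dots> \<le> (\<Sum>e\<in>T. 1 - real b1 / ?n)"
        using pf_cyc_ge[OF xs(1,2,4) nex xs(3)] TE by (intro sum_mono) auto
      also have "\<dots> = real (card T) * (1 - real b1 / ?n)" by simp
      also have "\<dots> \<le> real b2 * (1 - real b1 / ?n)" using cT b1n by (intro mult_right_mono) auto
      finally have "Zf ?sc T \<le> real b2 * (1 - real b1 / ?n)" .
      thus "Zf ?sc T \<le> U2 C ?sc ?tc + (bnd - real b1 / ?n * real b2)"
        using U2eq U1le by (simp add: algebra_simps)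
    qed
  qed
qed

end

context gm begin

lemma low_bound:
  assumes ys: "distinct ys" "is_set_packing V E C (set ys)" "b2 \<le> length ys" "0 < b2"
    and al: "\<alpha> \<le> 1" and ok: "rate_ok V E C \<alpha> b b2"
  shows "\<lceil>\<alpha> * real (length ys)\<rceil> \<le> int b"
proof (rule ccontr)
  assume "\<not> \<lceil>\<alpha> * real (length ys)\<rceil> \<le> int b"
  hence lt: "int b < \<lceil>\<alpha> * real (length ys)\<rceil>" by simp
  hence blt: "real b < \<alpha> * real (length ys)" by (simp add: less_ceiling_iff)
  have "\<alpha> * real (length ys) \<le> 1 * real (length ys)" using al by (intro mult_right_mono) auto
  hence bm: "b < length ys" using blt by linarith
  have m0: "0 < real (length ys)" using bm by (cases ys) auto
  obtain \<sigma> where n: "nash V E C b b2 \<sigma>" using nash_exists by blast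
  obtain s t where st: "\<sigma> = (s,t)" by (cases \<sigma>)
  have r: "{} \<notin> set_pmf t \<and> det_rate C (s,t) \<le> real b / real (length ys)"
    using R2[OF n[unfolded st] ys(1,2,3) bm ys(4)] .
  hence "\<alpha> \<le> det_rate C (s,t)" using ok n st unfolding rate_ok_def by auto
  moreover have "real b / real (length ys) < \<alpha>" using blt m0 by (simp add: divide_less_eq mult.commute)
  ultimately show False using r by simp
qed

lemma rate_ok_up:
  assumes xs: "distinct xs" "set xs \<subseteq> V" "cover_set C (set xs) = E" "b1 \<le> length xs" "b2 \<le> length xs"
    and b2: "0 < b2" and al: "\<alpha> \<le> real b1 / real (length xs)"
  shows "rate_ok V E C \<alpha> b1 b2"
  unfolding rate_ok_def
proof (intro allI impI)
  fix \<sigma> assume a: "nash V E C b1 b2 \<sigma> \<and> {} \<notin> set_pmf (snd \<sigma>)"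
  obtain s t where st: "\<sigma> = (s,t)" by (cases \<sigma>)
  have "real b1 / real (length xs) \<le> det_rate C (s,t)"
    using R1[of b1 b2 s t xs] a xs b2 st by auto
  thus "\<alpha> \<le> det_rate C \<sigma>" using al st by simp
qed

end

theorem proposition4:
  fixes V :: "'v set" and E :: "'e set" and C :: "'v \<Rightarrow> 'e set"
    and \<alpha> :: real and b2 :: nat and b1' :: nat and \<epsilon> :: real
  assumes "finite V" "V \<noteq> {}" "finite E" "E \<noteq> {}"
    and "\<forall>i\<in>V. C i \<subseteq> E" and "\<forall>e\<in>E. \<exists>i\<in>V. e \<in> C i"
    and "0 < \<alpha>" "\<alpha> \<le> 1"
    and "0 < b2" "b2 < mstar V E C"
  defines "b1' \<equiv> nat \<lceil>\<alpha> * real (nstar V E C)\<rceil>"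
    and "\<epsilon> \<equiv> real b1' * real b2 *
               (1 / max (real b1') (real (mstar V E C)) - 1 / real (nstar V E C))"
  shows
    "(\<forall>Smin Tmax xs ys. is_min_set_cover V E C Smin \<and> is_max_set_packing V E C Tmax \<and>
        distinct xs \<and> set xs = Smin \<and> distinct ys \<and> set ys = Tmax \<longrightarrow>
        feasible_Peps V E C \<alpha> b2 \<epsilon> b1' (cyc_strategy xs b1', cyc_strategy ys b2))
     \<and> (\<exists>b1 \<sigma>. feasible_P V E C \<alpha> b2 b1 \<sigma>)
     \<and> \<lceil>\<alpha> * real (mstar V E C)\<rceil> \<le> int (opt_P V E C \<alpha> b2)
     \<and> int (opt_P V E C \<alpha> b2) \<le> \<lceil>\<alpha> * real (nstar V E C)\<rceil>
     \<and> (\<exists>b1 \<sigma>. feasible_Peps V E C \<alpha> b2 \<epsilon> b1 \<sigma>)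
     \<and> \<lceil>\<alpha> * real (mstar V E C)\<rceil> \<le> int (opt_Peps V E C \<alpha> b2 \<epsilon>)
     \<and> int (opt_Peps V E C \<alpha> b2 \<epsilon>) \<le> \<lceil>\<alpha> * real (nstar V E C)\<rceil>
     \<and> int b1' - int (opt_P V E C \<alpha> b2)
         \<le> \<lceil>\<alpha> * real (nstar V E C)\<rceil> - \<lceil>\<alpha> * real (mstar V E C)\<rceil>
     \<and> int b1' - int (opt_Peps V E C \<alpha> b2 \<epsilon>)
         \<le> \<lceil>\<alpha> * real (nstar V E C)\<rceil> - \<lceil>\<alpha> * real (mstar V E C)\<rceil>"
proof -
  interpret gm V E C using assms(1,3,5,6) by unfold_locales auto
  let ?N = "nstar V E C" and ?M = "mstar V E C"
  have b1'_def: "b1' = nat \<lceil>\<alpha> * real ?N\<rceil>" using assms(11) by simp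
  have eps_def: "\<epsilon> = real b1' * real b2 * (1 / max (real b1') (real ?M) - 1 / real ?N)" using assms(12) by simp
  have coverV: "is_set_cover V E C V"
    unfolding is_set_cover_def cover_set_def using assms(5,6) by auto
  have exN: "\<exists>S. is_set_cover V E C S \<and> card S = ?N"
    unfolding nstar_def by (rule LeastI[of _ "card V"]) (use coverV in auto)
  then obtain Smin where Smin: "is_min_set_cover V E C Smin" unfolding is_min_set_cover_def by blast
  have SminV: "Smin \<subseteq> V" and SminE: "cover_set C Smin = E" and cSmin: "card Smin = ?N"
    using Smin unfolding is_min_set_cover_def is_set_cover_def by auto
  have fSmin: "finite Smin" using SminV assms(1) finite_subset by blast
  obtain xs0 where xs0: "set xs0 = Smin" "distinct xs0" using finite_distinct_list[OF fSmin] by blast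
  have lxs0: "length xs0 = ?N" using xs0 cSmin distinct_card by fastforce
  define P where "P = {card T | T. is_set_packing V E C T}"
  have finP: "finite P"
  proof -
    have "P \<subseteq> card ` Pow E" unfolding P_def is_set_packing_def by auto
    thus ?thesis using assms(3) finite_subset by blast
  qed
  have neP: "P \<noteq> {}" unfolding P_def is_set_packing_def by auto
  have "?M \<in> P" unfolding mstar_def P_def[symmetric] using Max_in[OF finP neP] .
  then obtain Tmax where Tmax: "is_max_set_packing V E C Tmax" unfolding P_def is_max_set_packing_def by auto
  have TmaxP: "is_set_packing V E C Tmax" and cTmax: "card Tmax = ?M"
    using Tmax unfolding is_max_set_packing_def by auto
  have TmaxE: "Tmax \<subseteq> E" using TmaxP unfolding is_set_packing_def by auto
  have fTmax: "finite Tmax" using TmaxE assms(3) finite_subset by blast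
  obtain ys0 where ys0: "set ys0 = Tmax" "distinct ys0" using finite_distinct_list[OF fTmax] by blast
  have lys0: "length ys0 = ?M" using ys0 cTmax distinct_card by fastforce
  have MN: "?M \<le> ?N"
  proof -
    have "cover_set C Smin \<inter> Tmax = Tmax" using SminE TmaxE by auto
    hence "card Tmax \<le> card Smin" using packing_card[OF TmaxP SminV] by simp
    thus ?thesis using cTmax cSmin by simp
  qed
  have b2N: "b2 \<le> ?N" using assms(10) MN by simp
  have N0: "0 < ?N" using assms(9) b2N by simp
  have aN0: "0 < \<alpha> * real ?N" using assms(7) N0 by simp
  have ceil_pos: "0 < \<lceil>\<alpha> * real ?N\<rceil>" using aN0 by simp
  have ib1': "int b1' = \<lceil>\<alpha> * real ?N\<rceil>" unfolding b1'_def using ceil_pos by simp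
  have "0 < int b1'" by (subst ib1') (rule ceil_pos)
  hence b1'0: "0 < b1'" by simp
  have b1'N: "b1' \<le> ?N"
  proof -
    have "\<alpha> * real ?N \<le> 1 * real ?N" using assms(8) by (intro mult_right_mono) auto
    hence "\<lceil>\<alpha> * real ?N\<rceil> \<le> int ?N" by (simp add: ceiling_le_iff)
    thus ?thesis using ib1' by simp
  qed
  have alb1': "\<alpha> \<le> real b1' / real ?N"
  proof -
    have "\<alpha> * real ?N \<le> real_of_int \<lceil>\<alpha> * real ?N\<rceil>" by (rule le_of_int_ceiling)
    also have "\<dots> = real_of_int (int b1')" using ib1' by simp
    also have "\<dots> = real b1'" by simp
    finally have "\<alpha> * real ?N \<le> real b1'" .
    thus ?thesis using N0 by (simp add: le_divide_eq)
  qed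
  have rok: "rate_ok V E C \<alpha> b1' b2"
    using rate_ok_up[OF xs0(2) _ _ _ _ assms(9)] xs0 SminV SminE lxs0 b1'N b2N alb1' by simp
  have claim1: "\<forall>Smin Tmax xs ys. is_min_set_cover V E C Smin \<and> is_max_set_packing V E C Tmax \<and>
        distinct xs \<and> set xs = Smin \<and> distinct ys \<and> set ys = Tmax \<longrightarrow>
        feasible_Peps V E C \<alpha> b2 \<epsilon> b1' (cyc_strategy xs b1', cyc_strategy ys b2)"
  proof (intro allI impI)
    fix S T xs ys
    assume h: "is_min_set_cover V E C S \<and> is_max_set_packing V E C T \<and>
        distinct xs \<and> set xs = S \<and> distinct ys \<and> set ys = T"
    have SV: "S \<subseteq> V" and SE: "cover_set C S = E" and cS: "card S = ?N"
      using h unfolding is_min_set_cover_def is_set_cover_def by auto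
    have TP: "is_set_packing V E C T" and cT: "card T = ?M"
      using h unfolding is_max_set_packing_def by auto
    have lxs: "length xs = ?N" using h cS distinct_card by fastforce
    have lys: "length ys = ?M" using h cT distinct_card by fastforce
    have "eps_nash V E C b1' b2
           (real b1' * real b2 * (1 / max (real b1') (real (length ys)) - 1 / real (length xs)))
           (cyc_strategy xs b1', cyc_strategy ys b2)"
      using h SV SE TP b1'N b1'0 lxs lys assms(9,10) by (intro cyc_eps) auto
    hence "eps_nash V E C b1' b2 \<epsilon> (cyc_strategy xs b1', cyc_strategy ys b2)"
      unfolding eps_def lxs lys .
    thus "feasible_Peps V E C \<alpha> b2 \<epsilon> b1' (cyc_strategy xs b1', cyc_strategy ys b2)"
      unfolding feasible_Peps_def using b1'0 rok by simp
  qed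
  have feasPeps: "feasible_Peps V E C \<alpha> b2 \<epsilon> b1' (cyc_strategy xs0 b1', cyc_strategy ys0 b2)"
    using claim1[rule_format, of Smin Tmax xs0 ys0] Smin Tmax xs0 ys0 by simp
  obtain \<sigma>0 where \<sigma>0: "nash V E C b1' b2 \<sigma>0" using nash_exists by blast
  have feasP: "feasible_P V E C \<alpha> b2 b1' \<sigma>0" unfolding feasible_P_def using b1'0 rok \<sigma>0 by simp
  have optP_le: "opt_P V E C \<alpha> b2 \<le> b1'"
    unfolding opt_P_def by (rule Least_le) (rule exI[of _ \<sigma>0], rule feasP)
  have optP_feas: "\<exists>\<sigma>. feasible_P V E C \<alpha> b2 (opt_P V E C \<alpha> b2) \<sigma>"
    unfolding opt_P_def by (rule LeastI_ex) (rule exI[of _ b1'], rule exI[of _ \<sigma>0], rule feasP)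
  have ys0P: "is_set_packing V E C (set ys0)" using TmaxP ys0 by simp
  have b2ys: "b2 \<le> length ys0" using lys0 assms(10) by simp
  have optP_ge: "\<lceil>\<alpha> * real ?M\<rceil> \<le> int (opt_P V E C \<alpha> b2)"
  proof -
    have "rate_ok V E C \<alpha> (opt_P V E C \<alpha> b2) b2" using optP_feas unfolding feasible_P_def by blast
    from low_bound[OF ys0(2) ys0P b2ys assms(9,8) this] show ?thesis using lys0 by simp
  qed
  have optE_le: "opt_Peps V E C \<alpha> b2 \<epsilon> \<le> b1'"
    unfolding opt_Peps_def by (rule Least_le) (rule exI, rule feasPeps)
  have optE_feas: "\<exists>\<sigma>. feasible_Peps V E C \<alpha> b2 \<epsilon> (opt_Peps V E C \<alpha> b2 \<epsilon>) \<sigma>"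
    unfolding opt_Peps_def by (rule LeastI_ex) (rule exI[of _ b1'], rule exI, rule feasPeps)
  have optE_ge: "\<lceil>\<alpha> * real ?M\<rceil> \<le> int (opt_Peps V E C \<alpha> b2 \<epsilon>)"
  proof -
    have "rate_ok V E C \<alpha> (opt_Peps V E C \<alpha> b2 \<epsilon>) b2" using optE_feas unfolding feasible_Peps_def by blast
    from low_bound[OF ys0(2) ys0P b2ys assms(9,8) this] show ?thesis using lys0 by simp
  qed
  have i1: "int (opt_P V E C \<alpha> b2) \<le> int b1'" using optP_le by simp
  have i2: "int (opt_Peps V E C \<alpha> b2 \<epsilon>) \<le> int b1'" using optE_le by simp
  show ?thesis
    apply (intro conjI)
    subgoal by (rule claim1)
    subgoal by (rule exI[of _ b1'], rule exI[of _ \<sigma>0], rule feasP)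
    subgoal by (rule optP_ge)
    subgoal using i1 ib1' by linarith
    subgoal by (rule exI[of _ b1'], rule exI, rule feasPeps)
    subgoal by (rule optE_ge)
    subgoal using i2 ib1' by linarith
    subgoal using optP_ge ib1' by linarith
    subgoal using optE_ge ib1' by linarith
    done
qed

end
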